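(* Consider the class of greedy MPP strategies defined below. (a) For every integer $\Delta_{in}\ge 2$ and every integer $g\ge 2$ there is a family of DAGs $G_n$ (with $n\to\infty$) of maximum in-degree $\Delta_{in}$, together with $k=2$ and a value of $r$, such that every strategy in the greedy class has cost at least $\bigl(\tfrac15\Delta_{in}-1\bigr)\cdot\mathrm{OPT}$ for all sufficiently large $n$. (b) For every integer $g\ge 2$ there is a family of DAGs $G_n$ (with $n\to\infty$), with $k=2$ and $r\ge n$, such that the ratio between the cost of any strategy in the greedy class and $\mathrm{OPT}$ is at least $1+\tfrac23 g-o(1)$ as $n\to\infty$.
   Context: Multiprocessor red-blue pebbling (MPP). Input: a DAG $G=(V,E)$ with $n=|V|$ and positive integers $k$ (number of processors), $r$ (fast-memory size per processor), $g$ (cost of an I/O step). $\Delta_{in}$ denotes the maximum in-degree of $G$; sources/sinks are nodes of in-degree/out-degree $0$. A configuration is a tuple $(R^1,\dots,R^k,B)$ of subsets of $V$ ($R^j$ = nodes carrying a red pebble of processor $j$, $B$ = nodes carrying a blue pebble); it is valid if $|R^j|\le r$ for all $j$. The initial configuration has all sets empty; a configuration is terminal if every sink lies in $B\cup\bigcup_j R^j$. The transition rules are: (R1) for some $m\le k$, pairwise distinct processors $j_1,\dots,j_m$ and nodes $v_1,\dots,v_m$ with $v_i\in R^{j_i}$, add each $v_i$ to $B$ (cost $g$); (R2) for some $m\le k$, pairwise distinct processors $j_1,\dots,j_m$ and nodes $v_1,\dots,v_m\in B$, add each $v_i$ to $R^{j_i}$ (cost $g$); (R3) for some $m\le k$,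 pairwise distinct processors $j_1,\dots,j_m$ and nodes $v_1,\dots,v_m$ such that every in-neighbor of $v_i$ lies in $R^{j_i}$, add each $v_i$ to $R^{j_i}$ (cost $1$); (R4) remove a single red or blue pebble (cost $0$). A pebbling strategy is a sequence of valid configurations starting at the initial configuration and ending at a terminal one, each obtained from its predecessor by one rule; its cost is the sum of the costs of the rules applied. $\mathrm{OPT}$ denotes the minimum cost of a pebbling strategy. Applications of (R1),(R2) are called I/O steps and applications of (R3) compute steps. Greedy class: a strategy belongs to the class if it proceeds as follows. First, the processors compute pairwise distinct source nodes in parallel. Afterwards, repeatedly: call a node ready if it has not yet been computed on any processor but all its in-neighbors have been computed on some processor. Each processor $p$ selects as its next-goal node a ready node maximizing the number of in-neighbors carrying a red pebble of $p$ (alternatively: maximizing the fraction of its in-neighbors carrying a red pebble of $p$; source nodes may be assigned fraction $0$ or $1$), with ties broken arbitrarily and distinct processors choosing distinct nodes (if two processors would choose the same node, it is given to one of them and the other chooses among the remaining ready nodes by the same rule). The processors then compute their next-goal nodes in a common (R3) step; before that step they may perform any I/O steps, deletions, and recomputations of nodes previously computed on the same processor. The only new nodes ever computed by a processor are its next-goal nodes. *)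

theory Defs
  imports Complex_Main
begin

definition in_nbrs :: "('v \<times> 'v) set \<Rightarrow> 'v \<Rightarrow> 'v set" where
  "in_nbrs E v = {u. (u, v) \<in> E}"

definition is_dag :: "'v set \<Rightarrow> ('v \<times> 'v) set \<Rightarrow> bool" where
  "is_dag V E \<longleftrightarrow> finite V \<and> E \<subseteq> V \<times> V \<and> acyclic E"

definition max_indeg :: "'v set \<Rightarrow> ('v \<times> 'v) set \<Rightarrow> nat" where
  "max_indeg V E = Max ((\<lambda>v. card (in_nbrs E v)) ` V)"

definition is_sink :: "'v set \<Rightarrow> ('v \<times> 'v) set \<Rightarrow> 'v \<Rightarrow> bool" where
  "is_sink V E v \<longleftrightarrow> v \<in> V \<and> {w. (v, w) \<in> E} = {}"

text \<open>A configuration: red pebbles of processor j (processors are 0..k-1) and blue pebbles.\<close>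
type_synonym 'v config = "(nat \<Rightarrow> 'v set) \<times> 'v set"

datatype 'v move =
    Save "(nat \<times> 'v) list"
  | Load "(nat \<times> 'v) list"
  | Compute "(nat \<times> 'v) list"
  | DelRed nat 'v
  | DelBlue 'v

definition multi_ok :: "nat \<Rightarrow> (nat \<times> 'v) list \<Rightarrow> bool" where
  "multi_ok k ps \<longleftrightarrow> ps \<noteq> [] \<and> distinct (map fst ps) \<and> (\<forall>(j, v) \<in> set ps. j < k)"

fun move_ok :: "'v set \<Rightarrow> ('v \<times> 'v) set \<Rightarrow> nat \<Rightarrow> 'v move \<Rightarrow> 'v config \<Rightarrow> bool" where
  "move_ok V E k (Save ps) (R, B) = (multi_ok k ps \<and> (\<forall>(j, v) \<in> set ps. v \<in> R j))"
| "move_ok V E k (Load ps) (R, B) = (multi_ok k ps \<and> (\<forall>(j, v) \<in> set ps. v \<in> B))"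
| "move_ok V E k (Compute ps) (R, B) =
     (multi_ok k ps \<and> (\<forall>(j, v) \<in> set ps. v \<in> V \<and> in_nbrs E v \<subseteq> R j))"
| "move_ok V E k (DelRed j v) (R, B) = (j < k \<and> v \<in> R j)"
| "move_ok V E k (DelBlue v) (R, B) = (v \<in> B)"

fun apply_move :: "'v move \<Rightarrow> 'v config \<Rightarrow> 'v config" where
  "apply_move (Save ps) (R, B) = (R, B \<union> snd ` set ps)"
| "apply_move (Load ps) (R, B) = ((\<lambda>j. R j \<union> {v. (j, v) \<in> set ps}), B)"
| "apply_move (Compute ps) (R, B) = ((\<lambda>j. R j \<union> {v. (j, v) \<in> set ps}), B)"
| "apply_move (DelRed j v) (R, B) = (R(j := R j - {v}), B)"
| "apply_move (DelBlue v) (R, B) = (R, B - {v})"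

fun move_cost :: "nat \<Rightarrow> 'v move \<Rightarrow> nat" where
  "move_cost g (Save ps) = g"
| "move_cost g (Load ps) = g"
| "move_cost g (Compute ps) = 1"
| "move_cost g (DelRed j v) = 0"
| "move_cost g (DelBlue v) = 0"

fun trace :: "'v config \<Rightarrow> 'v move list \<Rightarrow> 'v config list" where
  "trace C [] = [C]"
| "trace C (m # ms) = C # trace (apply_move m C) ms"

definition init_config :: "'v config" where
  "init_config = ((\<lambda>_. {}), {})"

definition valid_config :: "nat \<Rightarrow> nat \<Rightarrow> 'v config \<Rightarrow> bool" where
  "valid_config k r C \<longleftrightarrow> (\<forall>j<k. card (fst C j) \<le> r)"

definition terminal_config :: "'v set \<Rightarrow> ('v \<times> 'v) set \<Rightarrow> nat \<Rightarrow> 'v config \<Rightarrow> bool" where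
  "terminal_config V E k C \<longleftrightarrow> (\<forall>v. is_sink V E v \<longrightarrow> v \<in> snd C \<union> (\<Union>j<k. fst C j))"

definition pebbling_strategy ::
  "'v set \<Rightarrow> ('v \<times> 'v) set \<Rightarrow> nat \<Rightarrow> nat \<Rightarrow> 'v move list \<Rightarrow> bool" where
  "pebbling_strategy V E k r ms \<longleftrightarrow>
     (\<forall>i<length ms. move_ok V E k (ms ! i) (trace init_config ms ! i)) \<and>
     (\<forall>C \<in> set (trace init_config ms). valid_config k r C) \<and>
     terminal_config V E k (last (trace init_config ms))"

definition strategy_cost :: "nat \<Rightarrow> 'v move list \<Rightarrow> nat" where
  "strategy_cost g ms = sum_list (map (move_cost g) ms)"

definition mpp_opt :: "'v set \<Rightarrow> ('v \<times> 'v) set \<Rightarrow> nat \<Rightarrow> nat \<Rightarrow> nat \<Rightarrow> nat" where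
  "mpp_opt V E k r g = (INF ms \<in> {ms. pebbling_strategy V E k r ms}. strategy_cost g ms)"

definition computed_by :: "'v move list \<Rightarrow> nat \<Rightarrow> nat \<Rightarrow> 'v set" where
  "computed_by ms i j =
     {v. \<exists>i' < i. i' < length ms \<and> (\<exists>ps. ms ! i' = Compute ps \<and> (j, v) \<in> set ps)}"

definition computed :: "'v move list \<Rightarrow> nat \<Rightarrow> 'v set" where
  "computed ms i = (\<Union>j. computed_by ms i j)"

definition is_goal_step :: "'v move list \<Rightarrow> nat \<Rightarrow> bool" where
  "is_goal_step ms i \<longleftrightarrow> i < length ms \<and>
     (\<exists>ps. ms ! i = Compute ps \<and> (\<exists>(j, v) \<in> set ps. v \<notin> computed ms i))"

definition ready :: "'v set \<Rightarrow> ('v \<times> 'v) set \<Rightarrow> 'v set \<Rightarrow> 'v set" where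
  "ready V E H = {v \<in> V. v \<notin> H \<and> in_nbrs E v \<subseteq> H}"

text \<open>The two selection rules: number of red in-neighbors, or fraction of red in-neighbors
(with sources assigned fraction 0 (False) or 1 (True)).\<close>
datatype greedy_rule = Count_Rule | Fraction_Rule bool

definition greedy_score :: "greedy_rule \<Rightarrow> ('v \<times> 'v) set \<Rightarrow> 'v set \<Rightarrow> 'v \<Rightarrow> real" where
  "greedy_score rl E Rp v =
     (case rl of
        Count_Rule \<Rightarrow> real (card (in_nbrs E v \<inter> Rp))
      | Fraction_Rule s \<Rightarrow>
          (if in_nbrs E v = {} then (if s then 1 else 0)
           else real (card (in_nbrs E v \<inter> Rp)) / real (card (in_nbrs E v))))"

text \<open>A greedy assignment of next-goal nodes to processors: processors choose in some order,
each choosing a ready node (not chosen before) maximizing its score; as many processors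
receive a goal as possible.\<close>
definition greedy_assignment ::
  "greedy_rule \<Rightarrow> 'v set \<Rightarrow> ('v \<times> 'v) set \<Rightarrow> nat \<Rightarrow> (nat \<Rightarrow> 'v set) \<Rightarrow> 'v set
     \<Rightarrow> (nat \<times> 'v) list \<Rightarrow> bool" where
  "greedy_assignment rl V E k R H asg \<longleftrightarrow>
     distinct (map fst asg) \<and> (\<forall>(j, v) \<in> set asg. j < k) \<and>
     length asg = min k (card (ready V E H)) \<and>
     (\<forall>i < length asg.
        (let p = fst (asg ! i); v = snd (asg ! i);
             Rem = ready V E H - set (map snd (take i asg))
         in v \<in> Rem \<and> (\<forall>w \<in> Rem. greedy_score rl E (R p) w \<le> greedy_score rl E (R p) v)))"

definition selection_config :: "'v move list \<Rightarrow> nat \<Rightarrow> 'v config" where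
  "selection_config ms i =
     (if i = 0 then init_config
      else trace init_config ms ! Suc (GREATEST i'. i' < i \<and> is_goal_step ms i'))"

definition greedy_strategy ::
  "greedy_rule \<Rightarrow> 'v set \<Rightarrow> ('v \<times> 'v) set \<Rightarrow> nat \<Rightarrow> nat \<Rightarrow> 'v move list \<Rightarrow> bool" where
  "greedy_strategy rl V E k r ms \<longleftrightarrow>
     pebbling_strategy V E k r ms \<and>
     \<comment> \<open>every computation is a recomputation on the same processor or a new node\<close>
     (\<forall>i < length ms. \<forall>ps. ms ! i = Compute ps \<longrightarrow>
        (\<forall>(j, v) \<in> set ps. v \<in> computed_by ms i j \<or> v \<notin> computed ms i)) \<and>
     \<comment> \<open>the first move computes (distinct) source nodes in parallel\<close>
     is_goal_step ms 0 \<and>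
     \<comment> \<open>goal steps compute exactly the greedily selected next-goal nodes\<close>
     (\<forall>i. is_goal_step ms i \<longrightarrow>
        (\<exists>ps asg. ms ! i = Compute ps \<and> (\<forall>(j, v) \<in> set ps. v \<notin> computed ms i) \<and>
           set ps = set asg \<and>
           greedy_assignment rl V E k (fst (selection_config ms i)) (computed ms i) asg))"

end

theory Submission
  imports Defs
begin

lemma length_trace[simp]: "length (trace C ms) = Suc (length ms)"
  by (induction ms arbitrary: C) auto

lemma trace_nth_0[simp]: "trace C ms ! 0 = C"
  by (cases ms) auto

lemma trace_nth_Suc: "i < length ms \<Longrightarrow> trace C ms ! Suc i = apply_move (ms ! i) (trace C ms ! i)"
proof (induction ms arbitrary: C i)
  case Nil then show ?case by simp
next
  case (Cons m ms)
  show ?case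
  proof (cases i)
    case 0 then show ?thesis by (cases ms) auto
  next
    case (Suc i') then show ?thesis using Cons by auto
  qed
qed

lemma last_trace: "last (trace C ms) = trace C ms ! length ms"
proof -
  have "trace C ms \<noteq> []" by (metis length_trace list.size(3) nat.distinct(1))
  thus ?thesis by (simp add: last_conv_nth)
qed

lemma set_trace: "set (trace C ms) = {trace C ms ! t | t. t \<le> length ms}"
  by (auto simp: in_set_conv_nth less_Suc_eq_le) (metis le_imp_less_Suc length_trace)

lemma computed_by_0[simp]: "computed_by ms 0 j = {}"
  by (simp add: computed_by_def)

lemma computed_0[simp]: "computed ms 0 = {}"
  by (simp add: computed_def)

lemma computed_by_Suc: "computed_by ms (Suc t) j = computed_by ms t j \<union>
   {v. t < length ms \<and> (\<exists>ps. ms ! t = Compute ps \<and> (j, v) \<in> set ps)}"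
  unfolding computed_by_def by (auto simp: less_Suc_eq)

lemma computed_Suc: "computed ms (Suc t) = computed ms t \<union>
   {v. t < length ms \<and> (\<exists>ps j. ms ! t = Compute ps \<and> (j, v) \<in> set ps)}"
  unfolding computed_def by (auto simp: computed_by_Suc)

lemma computed_by_mono: "t \<le> t' \<Longrightarrow> computed_by ms t j \<subseteq> computed_by ms t' j"
  unfolding computed_by_def by (blast intro: less_le_trans)

lemma computed_mono: assumes tt: "t \<le> t'" shows "computed ms t \<subseteq> computed ms t'"
proof
  fix v assume "v \<in> computed ms t"
  then obtain j where "v \<in> computed_by ms t j" by (auto simp: computed_def)
  then have "v \<in> computed_by ms t' j" using computed_by_mono[OF tt, of ms j] by blast
  then show "v \<in> computed ms t'" by (auto simp: computed_def)
qed

lemma computed_iff: "v \<in> computed ms t \<longleftrightarrow> (\<exists>i<t. i < length ms \<and> (\<exists>ps j. ms ! i = Compute ps \<and> (j, v) \<in> set ps))"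
  unfolding computed_def computed_by_def by auto

lemma computed_by_sub: "computed_by ms t j \<subseteq> computed ms t"
  unfolding computed_def by auto

lemma computed_by_len: "t \<ge> length ms \<Longrightarrow> computed_by ms t j = computed_by ms (length ms) j"
  unfolding computed_by_def by (blast intro: less_le_trans)

lemma computed_len: "t \<ge> length ms \<Longrightarrow> computed ms t = computed ms (length ms)"
  unfolding computed_def using computed_by_len[of ms t] by simp

lemma apply_move_fst_new:
  assumes "x \<in> fst (apply_move m C) q" "x \<notin> fst C q"
  shows "\<exists>ps. (m = Load ps \<or> m = Compute ps) \<and> (q, x) \<in> set ps"
  using assms by (cases C; cases m) (auto split: if_splits)

lemma apply_move_snd_new:
  assumes "x \<in> snd (apply_move m C)" "x \<notin> snd C"
  shows "\<exists>ps. m = Save ps \<and> x \<in> snd ` set ps"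
  using assms by (cases C; cases m) auto

lemma apply_move_fst_sub:
  "fst (apply_move m C) q \<subseteq> fst C q \<union> {x. \<exists>ps. (m = Load ps \<or> m = Compute ps) \<and> (q, x) \<in> set ps}"
  by (cases C; cases m) auto

lemma apply_move_snd_sub:
  "snd (apply_move m C) \<subseteq> snd C \<union> {x. \<exists>ps. m = Save ps \<and> x \<in> snd ` set ps}"
  by (cases C; cases m) auto

lemma apply_move_compute: "apply_move (Compute ps) C = ((\<lambda>j. fst C j \<union> {v. (j, v) \<in> set ps}), snd C)"
  by (cases C) auto

definition cfg :: "'v move list \<Rightarrow> nat \<Rightarrow> 'v config" where
  "cfg ms t = trace init_config ms ! t"

lemma cfg_0[simp]: "cfg ms 0 = init_config" by (simp add: cfg_def)

lemma cfg_Suc: "t < length ms \<Longrightarrow> cfg ms (Suc t) = apply_move (ms ! t) (cfg ms t)"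
  by (simp add: cfg_def trace_nth_Suc)

lemma acq_R:
  assumes "a \<le> b" "b \<le> length ms" "x \<notin> fst (cfg ms a) q" "x \<in> fst (cfg ms b) q"
  shows "\<exists>t. a \<le> t \<and> t < b \<and> (\<exists>ps. (ms ! t = Load ps \<or> ms ! t = Compute ps) \<and> (q, x) \<in> set ps)"
  using assms
proof (induction b)
  case 0 then show ?case by simp
next
  case (Suc b)
  show ?case
  proof (cases "a \<le> b \<and> x \<in> fst (cfg ms b) q")
    case True
    have "b \<le> length ms" using Suc.prems(2) by simp
    from Suc.IH[OF conjunct1[OF True] this Suc.prems(3) conjunct2[OF True]]
    obtain t where "a \<le> t" "t < b" "\<exists>ps. (ms ! t = Load ps \<or> ms ! t = Compute ps) \<and> (q, x) \<in> set ps" by blast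
    then show ?thesis by (intro exI[of _ t]) auto
  next
    case False
    have nb: "x \<notin> fst (cfg ms b) q"
    proof
      assume "x \<in> fst (cfg ms b) q"
      with False have "\<not> a \<le> b" by blast
      then have "a = Suc b" using Suc.prems(1) by simp
      then show False using Suc.prems by simp
    qed
    moreover have "x \<in> fst (apply_move (ms ! b) (cfg ms b)) q" using Suc.prems cfg_Suc[of b ms] by simp
    ultimately obtain ps where "(ms ! b = Load ps \<or> ms ! b = Compute ps) \<and> (q, x) \<in> set ps" using apply_move_fst_new[of x] by (metis (no_types))
    moreover have "a \<le> b" using Suc.prems nb by (cases "a = Suc b") auto
    ultimately show ?thesis by blast
  qed
qed

lemma acq_B:
  assumes "a \<le> b" "b \<le> length ms" "x \<notin> snd (cfg ms a)" "x \<in> snd (cfg ms b)"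
  shows "\<exists>t. a \<le> t \<and> t < b \<and> (\<exists>ps. ms ! t = Save ps \<and> x \<in> snd ` set ps)"
  using assms
proof (induction b)
  case 0 then show ?case by simp
next
  case (Suc b)
  show ?case
  proof (cases "a \<le> b \<and> x \<in> snd (cfg ms b)")
    case True
    have "b \<le> length ms" using Suc.prems(2) by simp
    from Suc.IH[OF conjunct1[OF True] this Suc.prems(3) conjunct2[OF True]]
    obtain t where "a \<le> t" "t < b" "\<exists>ps. ms ! t = Save ps \<and> x \<in> snd ` set ps" by blast
    then show ?thesis by (intro exI[of _ t]) auto
  next
    case False
    have nb: "x \<notin> snd (cfg ms b)"
    proof
      assume "x \<in> snd (cfg ms b)"
      with False have "\<not> a \<le> b" by blast
      then have "a = Suc b" using Suc.prems(1) by simp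
      then show False using Suc.prems by simp
    qed
    moreover have "x \<in> snd (apply_move (ms ! b) (cfg ms b))" using Suc.prems cfg_Suc[of b ms] by simp
    ultimately obtain ps where "ms ! b = Save ps \<and> x \<in> snd ` set ps" using apply_move_snd_new[of x] by (metis (no_types))
    moreover have "a \<le> b" using Suc.prems nb by (cases "a = Suc b") auto
    ultimately show ?thesis by blast
  qed
qed


lemma ps_ok: "pebbling_strategy V E k r ms \<Longrightarrow> t < length ms \<Longrightarrow> move_ok V E k (ms ! t) (cfg ms t)"
  unfolding pebbling_strategy_def cfg_def by blast

lemma ps_valid: "pebbling_strategy V E k r ms \<Longrightarrow> t \<le> length ms \<Longrightarrow> valid_config k r (cfg ms t)"
  unfolding pebbling_strategy_def cfg_def set_trace by blast

lemma ps_term: "pebbling_strategy V E k r ms \<Longrightarrow> terminal_config V E k (cfg ms (length ms))"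
  unfolding pebbling_strategy_def cfg_def last_trace by blast

lemma ok_invariant:
  assumes ok: "\<And>t. t < length ms \<Longrightarrow> move_ok V E k (ms ! t) (cfg ms t)"
  shows "t \<le> length ms \<Longrightarrow> (\<forall>j. fst (cfg ms t) j \<subseteq> computed ms t) \<and> snd (cfg ms t) \<subseteq> computed ms t
     \<and> computed ms t \<subseteq> V"
proof (induction t)
  case 0 then show ?case by (simp add: init_config_def)
next
  case (Suc t)
  then have tl: "t < length ms" by simp
  have IH: "\<forall>j. fst (cfg ms t) j \<subseteq> computed ms t" "snd (cfg ms t) \<subseteq> computed ms t" "computed ms t \<subseteq> V"
    using Suc by auto
  have mono: "computed ms t \<subseteq> computed ms (Suc t)" by (rule computed_mono) simp
  obtain R B where RB: "cfg ms t = (R, B)" by fastforce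
  have okt: "move_ok V E k (ms ! t) (R, B)" using ok[OF tl] RB by simp
  have cS: "cfg ms (Suc t) = apply_move (ms ! t) (R, B)" using cfg_Suc[OF tl] RB by simp
  show ?case
  proof (cases "ms ! t")
    case (Save ps)
    then show ?thesis using IH mono cS okt RB computed_Suc[of ms t] tl by (auto 0 3)
  next
    case (Load ps)
    then show ?thesis using IH mono cS okt RB computed_Suc[of ms t] tl by (auto 0 3)
  next
    case (Compute ps)
    then show ?thesis using IH mono cS okt RB computed_Suc[of ms t] tl by (auto 0 3)
  next
    case (DelRed j v)
    then show ?thesis using IH mono cS okt RB computed_Suc[of ms t] tl by (auto 0 3)
  next
    case (DelBlue v)
    then show ?thesis using IH mono cS okt RB computed_Suc[of ms t] tl by (auto 0 3)
  qed
qed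

lemma ps_inv:
  assumes "pebbling_strategy V E k r ms" "t \<le> length ms"
  shows "fst (cfg ms t) j \<subseteq> computed ms t" "snd (cfg ms t) \<subseteq> computed ms t" "computed ms t \<subseteq> V"
  using ok_invariant[of ms V E k t] ps_ok[OF assms(1)] assms(2) by blast+

lemma ps_down:
  assumes "pebbling_strategy V E k r ms" "v \<in> computed ms t"
  shows "in_nbrs E v \<subseteq> computed ms t"
proof -
  obtain i ps j where i: "i < t" "i < length ms" "ms ! i = Compute ps" "(j, v) \<in> set ps"
    using assms(2) unfolding computed_iff by blast
  obtain R B where RB: "cfg ms i = (R, B)" by fastforce
  have "move_ok V E k (ms ! i) (R, B)" using ps_ok[OF assms(1) i(2)] RB by simp
  then have "in_nbrs E v \<subseteq> R j" using i by auto
  also have "R j \<subseteq> computed ms i" using ps_inv(1)[OF assms(1), of i j] RB i by simp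
  also have "\<dots> \<subseteq> computed ms t" using computed_mono[of i t ms] i by simp
  finally show ?thesis .
qed

lemma ps_compute_ok:
  assumes "pebbling_strategy V E k r ms" "t < length ms" "ms ! t = Compute ps" "(j, v) \<in> set ps"
  shows "in_nbrs E v \<subseteq> fst (cfg ms t) j" "v \<in> V" "j < k" "distinct (map fst ps)"
proof -
  obtain R B where RB: "cfg ms t = (R, B)" by fastforce
  have "move_ok V E k (ms ! t) (R, B)" using ps_ok[OF assms(1,2)] RB by simp
  then show "in_nbrs E v \<subseteq> fst (cfg ms t) j" "v \<in> V" "j < k" "distinct (map fst ps)"
    using assms RB by (auto simp: multi_ok_def)
qed

lemma ps_multi_ok:
  assumes "pebbling_strategy V E k r ms" "t < length ms"
  shows "ms ! t = Load ps \<Longrightarrow> multi_ok k ps" "ms ! t = Compute ps \<Longrightarrow> multi_ok k ps"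
        "ms ! t = Save ps \<Longrightarrow> multi_ok k ps"
proof -
  obtain R B where RB: "cfg ms t = (R, B)" by fastforce
  have "move_ok V E k (ms ! t) (R, B)" using ps_ok[OF assms(1,2)] RB by simp
  then show "ms ! t = Load ps \<Longrightarrow> multi_ok k ps" "ms ! t = Compute ps \<Longrightarrow> multi_ok k ps"
        "ms ! t = Save ps \<Longrightarrow> multi_ok k ps" by auto
qed

lemma distinct_fst_eq: "distinct (map fst xs) \<Longrightarrow> (a, v) \<in> set xs \<Longrightarrow> (a, w) \<in> set xs \<Longrightarrow> v = w"
  by (metis eq_key_imp_eq_value)

lemma distinct_snd_eq: "distinct (map snd xs) \<Longrightarrow> (a, v) \<in> set xs \<Longrightarrow> (b, v) \<in> set xs \<Longrightarrow> a = b"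
  by (metis distinct_map inj_onD prod.inject snd_conv)

lemma greedy_asg_distinct_snd:
  assumes "greedy_assignment rl V E k R H asg"
  shows "distinct (map snd asg)"
proof -
  have A: "\<And>i. i < length asg \<Longrightarrow> snd (asg ! i) \<notin> set (map snd (take i asg))"
    using assms unfolding greedy_assignment_def Let_def by auto
  show ?thesis
  proof (rule distinct_conv_nth[THEN iffD2], intro allI impI)
    fix i j assume ij: "i < length (map snd asg)" "j < length (map snd asg)" "i \<noteq> j"
    show "map snd asg ! i \<noteq> map snd asg ! j"
    proof (cases "i < j")
      case True
      have "snd (asg ! i) \<in> set (map snd (take j asg))" using True ij
        by (metis in_set_conv_nth length_map length_take min.absorb4 nth_map nth_take)
      moreover have "snd (asg ! j) \<notin> set (map snd (take j asg))" using A[of j] ij by simp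
      ultimately show ?thesis using ij by (metis length_map nth_map)
    next
      case False
      then have "j < i" using ij by simp
      have "snd (asg ! j) \<in> set (map snd (take i asg))" using \<open>j < i\<close> ij
        by (metis in_set_conv_nth length_map length_take min.absorb4 nth_map nth_take)
      moreover have "snd (asg ! i) \<notin> set (map snd (take i asg))" using A[of i] ij by simp
      ultimately show ?thesis using ij by (metis length_map nth_map)
    qed
  qed
qed

lemma greedy_asg_props:
  assumes "greedy_assignment rl V E k R H asg"
  shows "distinct (map fst asg)" "\<forall>(j, v) \<in> set asg. j < k"
        "length asg = min k (card (ready V E H))" "snd ` set asg \<subseteq> ready V E H"
proof -
  show "distinct (map fst asg)" "\<forall>(j, v) \<in> set asg. j < k" "length asg = min k (card (ready V E H))"
    using assms unfolding greedy_assignment_def by auto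
  show "snd ` set asg \<subseteq> ready V E H"
  proof
    fix v assume "v \<in> snd ` set asg"
    then obtain i where i: "i < length asg" "v = snd (asg ! i)" by (metis imageE in_set_conv_nth)
    then show "v \<in> ready V E H" using assms unfolding greedy_assignment_def Let_def by auto
  qed
qed

lemma greedy_ps: "greedy_strategy rl V E k r ms \<Longrightarrow> pebbling_strategy V E k r ms"
  unfolding greedy_strategy_def by blast

lemma greedy_recomp:
  assumes "greedy_strategy rl V E k r ms" "t < length ms" "ms ! t = Compute ps" "(j, v) \<in> set ps"
    "v \<in> computed ms t"
  shows "v \<in> computed_by ms t j"
  using assms unfolding greedy_strategy_def by fastforce

lemma greedy_goal:
  assumes "greedy_strategy rl V E k r ms" "t < length ms" "ms ! t = Compute ps" "(j, v) \<in> set ps"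
    "v \<notin> computed ms t"
  shows "\<exists>asg. (\<forall>(j, v) \<in> set ps. v \<notin> computed ms t) \<and> set ps = set asg \<and>
           greedy_assignment rl V E k (fst (selection_config ms t)) (computed ms t) asg"
proof -
  have "is_goal_step ms t" unfolding is_goal_step_def using assms(2-5) by blast
  then show ?thesis using assms(1,3) unfolding greedy_strategy_def by fastforce
qed

lemma greedy_disjoint:
  assumes g: "greedy_strategy rl V E k r ms"
  shows "v \<in> computed_by ms t p \<Longrightarrow> v \<in> computed_by ms t q \<Longrightarrow> p = q"
proof (induction t)
  case 0 then show ?case unfolding computed_by_0 by blast
next
  case (Suc t)
  let ?N = "\<lambda>j. {v. t < length ms \<and> (\<exists>ps. ms ! t = Compute ps \<and> (j, v) \<in> set ps)}"
  have P: "v \<in> computed_by ms t p \<or> v \<in> ?N p" and Q: "v \<in> computed_by ms t q \<or> v \<in> ?N q"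
    using Suc.prems unfolding computed_by_Suc by blast+
  show ?case
  proof (cases "v \<in> computed ms t")
    case True
    have "v \<in> computed_by ms t p"
    proof (cases "v \<in> computed_by ms t p")
      case False
      then obtain ps where "t < length ms" "ms ! t = Compute ps" "(p, v) \<in> set ps" using P by auto
      then show ?thesis using greedy_recomp[OF g _ _ _ True] by blast
    qed
    moreover have "v \<in> computed_by ms t q"
    proof (cases "v \<in> computed_by ms t q")
      case False
      then obtain ps where "t < length ms" "ms ! t = Compute ps" "(q, v) \<in> set ps" using Q by auto
      then show ?thesis using greedy_recomp[OF g _ _ _ True] by blast
    qed
    ultimately show ?thesis using Suc.IH by blast
  next
    case False
    then have "v \<notin> computed_by ms t p" "v \<notin> computed_by ms t q" using computed_by_sub[of ms t p] computed_by_sub[of ms t q] by blast+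
    then obtain ps where ps: "t < length ms" "ms ! t = Compute ps" "(p, v) \<in> set ps" "(q, v) \<in> set ps"
      using P Q by auto
    obtain asg where sa: "set ps = set asg" and ga: "greedy_assignment rl V E k (fst (selection_config ms t)) (computed ms t) asg"
      using greedy_goal[OF g ps(1,2,3) False] by blast
    have d: "distinct (map snd asg)" by (rule greedy_asg_distinct_snd[OF ga])
    have "(p, v) \<in> set asg" "(q, v) \<in> set asg" using ps(3,4) sa by auto
    then show ?thesis using distinct_snd_eq[OF d] by blast
  qed
qed


lemma acyclic_less: "acyclic {(u, v::nat). u < v}"
proof -
  have "(x, y) \<in> {(u, v::nat). u < v}\<^sup>+ \<Longrightarrow> x < y" for x y
    by (induction rule: trancl_induct) auto
  then show ?thesis unfolding acyclic_def by blast
qed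

locale lev =
  fixes M :: nat and inn :: "nat \<Rightarrow> nat set"
  assumes C1: "u \<in> inn v \<Longrightarrow> u div 2 < v div 2"
    and C2: "2 \<le> v \<Longrightarrow> v < 2 * M \<Longrightarrow> \<exists>u\<in>inn v. u div 2 = v div 2 - 1"
begin

definition VV :: "nat set" where "VV = {..<2 * M}"
definition EE :: "(nat \<times> nat) set" where "EE = {(u, v). v < 2 * M \<and> u \<in> inn v}"

lemma inn_less: "u \<in> inn v \<Longrightarrow> u < v"
  using C1[of u v] by linarith

lemma in_nbrs_EE: "in_nbrs EE v = (if v < 2 * M then inn v else {})"
  unfolding in_nbrs_def EE_def by auto

lemma dag: "is_dag VV EE"
proof -
  have "EE \<subseteq> VV \<times> VV" unfolding EE_def VV_def using inn_less by fastforce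
  moreover have "EE \<subseteq> {(u, v). u < v}" unfolding EE_def using inn_less by blast
  ultimately show ?thesis unfolding is_dag_def VV_def
    using acyclic_subset[OF acyclic_less] by blast
qed

lemma card_VV: "card VV = 2 * M" unfolding VV_def by simp

lemma all_computed:
  assumes ps: "pebbling_strategy VV EE k r ms" and v: "v < 2 * M"
  shows "v \<in> computed ms (length ms)"
  using v
proof (induction "2 * M - v" arbitrary: v rule: less_induct)
  case less
  show ?case
  proof (cases "is_sink VV EE v")
    case True
    have "terminal_config VV EE k (cfg ms (length ms))" by (rule ps_term[OF ps])
    then have "v \<in> snd (cfg ms (length ms)) \<union> (\<Union>j<k. fst (cfg ms (length ms)) j)"
      using True unfolding terminal_config_def by blast
    then show ?thesis using ps_inv[OF ps, of "length ms"] by blast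
  next
    case False
    then obtain w where w: "(v, w) \<in> EE" unfolding is_sink_def VV_def using less.prems by blast
    then have wl: "w < 2 * M" "v \<in> inn w" unfolding EE_def by auto
    then have "v < w" using inn_less by blast
    then have "w \<in> computed ms (length ms)" using less.hyps[of w] wl by simp
    then have "in_nbrs EE w \<subseteq> computed ms (length ms)" by (rule ps_down[OF ps])
    then show ?thesis using wl in_nbrs_EE by auto
  qed
qed

lemma ready_eq:
  assumes "l < M"
  shows "ready VV EE {..<2 * l} = {2 * l, 2 * l + 1}"
proof -
  have "v \<in> ready VV EE {..<2 * l} \<longleftrightarrow> v = 2 * l \<or> v = 2 * l + 1" for v
  proof
    assume r: "v \<in> ready VV EE {..<2 * l}"
    then have v: "v < 2 * M" "\<not> v < 2 * l" "inn v \<subseteq> {..<2 * l}"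
      unfolding ready_def VV_def using in_nbrs_EE[of v] by auto
    show "v = 2 * l \<or> v = 2 * l + 1"
    proof (rule ccontr)
      assume "\<not> (v = 2 * l \<or> v = 2 * l + 1)"
      then have "v \<ge> 2 * l + 2" using v by linarith
      then obtain u where "u \<in> inn v" "u div 2 = v div 2 - 1" using C2[of v] v by auto
      moreover have "v div 2 \<ge> l + 1" using \<open>v \<ge> 2 * l + 2\<close> by linarith
      ultimately show False using v(3) by fastforce
    qed
  next
    assume "v = 2 * l \<or> v = 2 * l + 1"
    then have "v < 2 * M" "v div 2 = l" using assms by auto
    moreover have "u \<in> inn v \<Longrightarrow> u < 2 * l" for u using C1[of u v] \<open>v div 2 = l\<close> by linarith
    ultimately show "v \<in> ready VV EE {..<2 * l}"
      unfolding ready_def VV_def using in_nbrs_EE[of v] \<open>v = 2 * l \<or> v = 2 * l + 1\<close> by auto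
  qed
  then show ?thesis by blast
qed

end

locale lev_greedy = lev +
  fixes rl r ms
  assumes g: "greedy_strategy rl VV EE 2 r ms"
begin

lemma ps: "pebbling_strategy VV EE 2 r ms" by (rule greedy_ps[OF g])

definition Tl :: "nat \<Rightarrow> nat" where
  "Tl l = (LEAST t. {2 * l, 2 * l + 1} \<inter> computed ms (Suc t) \<noteq> {})"

lemma up:
  assumes "v \<in> computed ms t" "l \<le> v div 2"
  shows "\<exists>w \<in> computed ms t. w div 2 = l"
  using assms
proof (induction v rule: less_induct)
  case (less v)
  show ?case
  proof (cases "v div 2 = l")
    case True then show ?thesis using less.prems by blast
  next
    case False
    have "computed ms t \<subseteq> VV"
    proof (cases "t \<le> length ms")
      case True then show ?thesis using ps_inv(3)[OF ps True] by blast
    next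
      case False then show ?thesis using ps_inv(3)[OF ps, of "length ms"] computed_len[of ms t] by simp
    qed
    then have vV: "v < 2 * M" using less.prems unfolding VV_def by auto
    have "v \<ge> 2" using False less.prems by linarith
    then obtain u where u: "u \<in> inn v" "u div 2 = v div 2 - 1" using C2 vV by blast
    have "u \<in> computed ms t" using ps_down[OF ps less.prems(1)] u in_nbrs_EE vV by auto
    moreover have "l \<le> u div 2" using u False less.prems by linarith
    ultimately show ?thesis using less.IH[of u] inn_less[OF u(1)] by blast
  qed
qed

lemma Tl_basic:
  assumes "l < M"
  shows "{2 * l, 2 * l + 1} \<inter> computed ms (Tl l) = {}"
        "{2 * l, 2 * l + 1} \<inter> computed ms (Suc (Tl l)) \<noteq> {}"
        "Tl l < length ms"
proof -
  have "2 * l \<in> computed ms (length ms)" using all_computed[OF ps] assms by simp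
  then have ex: "{2 * l, 2 * l + 1} \<inter> computed ms (Suc (length ms)) \<noteq> {}"
    using computed_len[of ms "Suc (length ms)"] by auto
  show A: "{2 * l, 2 * l + 1} \<inter> computed ms (Suc (Tl l)) \<noteq> {}"
    unfolding Tl_def by (rule LeastI_ex) (use ex in blast)
  show B: "{2 * l, 2 * l + 1} \<inter> computed ms (Tl l) = {}"
  proof (cases "Tl l")
    case 0 then show ?thesis by simp
  next
    case (Suc t')
    then have "t' < Tl l" by simp
    then have "\<not> ({2 * l, 2 * l + 1} \<inter> computed ms (Suc t') \<noteq> {})"
      unfolding Tl_def by (rule not_less_Least)
    then show ?thesis using Suc by simp
  qed
  show "Tl l < length ms"
  proof (rule ccontr)
    assume "\<not> Tl l < length ms"
    then have "computed ms (Suc (Tl l)) = computed ms (Tl l)"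
      using computed_len[of ms "Tl l"] computed_len[of ms "Suc (Tl l)"] by simp
    then show False using A B by simp
  qed
qed

lemma Tl_sub:
  assumes "l < M"
  shows "computed ms (Tl l) \<subseteq> {..<2 * l}"
proof
  fix v assume v: "v \<in> computed ms (Tl l)"
  show "v \<in> {..<2 * l}"
  proof (rule ccontr)
    assume "v \<notin> {..<2 * l}"
    then have "l \<le> v div 2" by auto
    then obtain w where "w \<in> computed ms (Tl l)" "w div 2 = l" using up v by blast
    then have "w \<in> {2 * l, 2 * l + 1} \<inter> computed ms (Tl l)" by auto
    then show False using Tl_basic(1)[OF assms] by blast
  qed
qed

lemma Tl_lt:
  assumes "Suc l < M"
  shows "Tl l < Tl (Suc l)"
proof -
  obtain v where v: "v \<in> {2 * Suc l, 2 * Suc l + 1}" "v \<in> computed ms (Suc (Tl (Suc l)))"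
    "v \<notin> computed ms (Tl (Suc l))"
    using Tl_basic[OF assms] by blast
  have tl: "Tl (Suc l) < length ms" using Tl_basic[OF assms] by blast
  obtain ps j where psj: "ms ! Tl (Suc l) = Compute ps" "(j, v) \<in> set ps"
    using v(2,3) computed_Suc[of ms "Tl (Suc l)"] by auto
  have vM: "v < 2 * M" "2 \<le> v" using v(1) assms by auto
  obtain u where u: "u \<in> inn v" "u div 2 = v div 2 - 1" using C2 vM by blast
  have "u \<in> fst (cfg ms (Tl (Suc l))) j" using ps_compute_ok(1)[OF ps tl psj] u in_nbrs_EE vM by auto
  then have uc: "u \<in> computed ms (Tl (Suc l))" using ps_inv(1)[OF ps less_imp_le[OF tl], of j] by blast
  have ul: "u \<in> {2 * l, 2 * l + 1}" using u(2) v(1) by auto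
  show ?thesis
  proof (cases "Tl (Suc l)")
    case 0 then show ?thesis using uc by simp
  next
    case (Suc t')
    then have "{2 * l, 2 * l + 1} \<inter> computed ms (Suc t') \<noteq> {}" using uc ul by auto
    then have "Tl l \<le> t'" unfolding Tl_def by (rule Least_le)
    then show ?thesis using Suc by simp
  qed
qed

lemma Tl_step:
  assumes l: "l < M" and H: "computed ms (Tl l) = {..<2 * l}"
  shows "\<exists>ps a b. ms ! Tl l = Compute ps \<and> set ps = {(a, 2 * l), (b, 2 * l + 1)} \<and> a \<noteq> b \<and> a < 2 \<and> b < 2"
        "computed ms (Suc (Tl l)) = {..<2 * l + 2}"
proof -
  obtain v where v: "v \<in> {2 * l, 2 * l + 1}" "v \<in> computed ms (Suc (Tl l))"
    "v \<notin> computed ms (Tl l)"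
    using Tl_basic[OF l] by blast
  have tl: "Tl l < length ms" using Tl_basic[OF l] by blast
  obtain ps j where psj: "ms ! Tl l = Compute ps" "(j, v) \<in> set ps"
    using v(2,3) computed_Suc[of ms "Tl l"] by auto
  obtain asg where sa: "set ps = set asg"
    and ga: "greedy_assignment rl VV EE 2 (fst (selection_config ms (Tl l))) (computed ms (Tl l)) asg"
    using greedy_goal[OF g tl psj v(3)] by blast
  note P = greedy_asg_props[OF ga]
  have rd: "ready VV EE (computed ms (Tl l)) = {2 * l, 2 * l + 1}" using ready_eq[OF l] H by simp
  have len: "length asg = 2" using P(3) rd by simp
  have ds: "distinct (map snd asg)" by (rule greedy_asg_distinct_snd[OF ga])
  obtain x y where xy: "asg = [x, y]" using len
    by (metis (no_types, opaque_lifting) One_nat_def Suc_1 length_0_conv length_Suc_conv)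
  have sxy: "snd x \<in> {2 * l, 2 * l + 1}" "snd y \<in> {2 * l, 2 * l + 1}" "snd x \<noteq> snd y"
    using P(4) rd ds xy by auto
  have fxy: "fst x \<noteq> fst y" "fst x < 2" "fst y < 2" using P(1,2) xy by auto
  show "\<exists>ps a b. ms ! Tl l = Compute ps \<and> set ps = {(a, 2 * l), (b, 2 * l + 1)} \<and> a \<noteq> b \<and> a < 2 \<and> b < 2"
  proof (cases "snd x = 2 * l")
    case True
    then have "snd y = 2 * l + 1" using sxy by auto
    then have "set ps = {(fst x, 2 * l), (fst y, 2 * l + 1)}" using sa xy True
      by (metis list.set(1) list.set(2) prod.collapse)
    then show ?thesis using psj fxy by blast
  next
    case False
    then have "snd x = 2 * l + 1" "snd y = 2 * l" using sxy by auto
    then have "set ps = {(fst y, 2 * l), (fst x, 2 * l + 1)}" using sa xy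
      by (metis insert_commute list.set(1) list.set(2) prod.collapse)
    then show ?thesis using psj fxy by metis
  qed
  then obtain a b where ab: "set ps = {(a, 2 * l), (b, 2 * l + 1)}"
    by (metis psj(1) move.inject(3))
  show "computed ms (Suc (Tl l)) = {..<2 * l + 2}"
  proof -
    have e: "{..<2 * l + 2} = {..<2 * l} \<union> {2 * l, 2 * l + 1}" by auto
    have "{v. \<exists>ps j. ms ! Tl l = Compute ps \<and> (j, v) \<in> set ps} = {2 * l, 2 * l + 1}"
      using psj(1) ab by auto
    then show ?thesis using computed_Suc[of ms "Tl l"] tl H e by simp
  qed
qed

lemma Tl_computed:
  "l < M \<Longrightarrow> computed ms (Tl l) = {..<2 * l}"
proof (induction l)
  case 0 then show ?case using Tl_sub[of 0] by simp
next
  case (Suc l)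
  have "computed ms (Suc (Tl l)) = {..<2 * l + 2}" using Tl_step(2)[of l] Suc by simp
  moreover have "Suc (Tl l) \<le> Tl (Suc l)" using Tl_lt Suc.prems by (simp add: Suc_leI)
  ultimately have "{..<2 * Suc l} \<subseteq> computed ms (Tl (Suc l))"
    using computed_mono[of "Suc (Tl l)" "Tl (Suc l)" ms] by simp
  then show ?case using Tl_sub[OF Suc.prems] by blast
qed

lemma Tl_props:
  assumes "l < M"
  shows "Tl l < length ms" "computed ms (Tl l) = {..<2 * l}"
    "\<exists>ps a b. ms ! Tl l = Compute ps \<and> set ps = {(a, 2 * l), (b, 2 * l + 1)} \<and> a \<noteq> b \<and> a < 2 \<and> b < 2"
    "computed ms (Suc (Tl l)) = {..<2 * l + 2}"
  using Tl_basic[OF assms] Tl_computed[OF assms] Tl_step[OF assms Tl_computed[OF assms]] by auto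

lemma Tl_mono: "l < l' \<Longrightarrow> l' < M \<Longrightarrow> Tl l < Tl l'"
proof (induction l' arbitrary: l)
  case 0 then show ?case by simp
next
  case (Suc l')
  then show ?case using Tl_lt[of l'] by (metis less_SucE order.strict_trans Suc_lessD)
qed

end


lemma strategy_cost_sum: "real (strategy_cost g ms) = (\<Sum>t = 0..<length ms. real (move_cost g (ms ! t)))"
  unfolding strategy_cost_def by (simp add: sum_list_sum_nth of_nat_sum)

lemma sum_windows:
  fixes c :: "nat \<Rightarrow> real" and T :: "nat \<Rightarrow> nat"
  assumes nn: "\<And>t. c t \<ge> 0"
    and mono: "\<And>l. l0 \<le> l \<Longrightarrow> l < m \<Longrightarrow> T l < T (Suc l)"
    and win: "\<And>l. l0 < l \<Longrightarrow> l \<le> m \<Longrightarrow> (\<Sum>t = Suc (T (l - 1))..<Suc (T l). c t) \<ge> A"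
    and lm: "l0 \<le> m"
  shows "(\<Sum>t = Suc (T l0)..<Suc (T m). c t) \<ge> real (m - l0) * A"
  using lm mono win
proof (induction m)
  case 0 then show ?case by simp
next
  case (Suc m)
  show ?case
  proof (cases "l0 = Suc m")
    case True then show ?thesis by simp
  next
    case False
    then have lm: "l0 \<le> m" using Suc.prems by simp
    have IH: "(\<Sum>t = Suc (T l0)..<Suc (T m). c t) \<ge> real (m - l0) * A"
      using Suc.IH[OF lm] Suc.prems by simp
    have W: "(\<Sum>t = Suc (T m)..<Suc (T (Suc m)). c t) \<ge> A"
      using Suc.prems(3)[of "Suc m"] lm by simp
    have mono': "\<And>l. l0 \<le> l \<Longrightarrow> l < Suc m \<Longrightarrow> T l < T (Suc l)" using Suc.prems(2) by blast
    have a0: "l0 + k \<le> m \<Longrightarrow> T l0 \<le> T (l0 + k)" for k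
    proof (induction k)
      case 0 show ?case by simp
    next
      case (Suc k) then show ?case using mono'[of "l0 + k"] by simp
    qed
    have a: "T l0 \<le> T m" using a0[of "m - l0"] lm by simp
    have b: "T m < T (Suc m)" using Suc.prems(2)[of m] lm by simp
    have "(\<Sum>t = Suc (T l0)..<Suc (T (Suc m)). c t) =
          (\<Sum>t = Suc (T l0)..<Suc (T m). c t) + (\<Sum>t = Suc (T m)..<Suc (T (Suc m)). c t)"
      using sum.atLeastLessThan_concat[of "Suc (T l0)" "Suc (T m)" "Suc (T (Suc m))" c] a b by simp
    moreover have "real (Suc m - l0) * A = real (m - l0) * A + A" using lm
      by (simp add: Suc_diff_le algebra_simps)
    ultimately show ?thesis using IH W by linarith
  qed
qed

lemma sum_two:
  fixes c :: "nat \<Rightarrow> real"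
  assumes "\<And>t. c t \<ge> 0" "a \<le> t0" "t0 < t1" "t1 < t2" "t2 < b"
  shows "(\<Sum>t = a..<b. c t) \<ge> c t0 + c t1 + c t2"
proof -
  have "(\<Sum>t\<in>{t0, t1, t2}. c t) \<le> (\<Sum>t = a..<b. c t)"
    by (rule sum_mono2) (use assms in auto)
  moreover have "(\<Sum>t\<in>{t0, t1, t2}. c t) = c t0 + c t1 + c t2" using assms by simp
  ultimately show ?thesis by simp
qed

context lev_greedy
begin

lemma cross:
  assumes l: "1 \<le> l" "l < M" and inn2: "{2 * l - 2, 2 * l - 1} \<subseteq> inn (2 * l)"
  shows "\<exists>t0 t1. Tl (l - 1) < t0 \<and> t0 < t1 \<and> t1 < Tl l \<and> (\<exists>ps. ms ! t0 = Save ps) \<and> (\<exists>ps. ms ! t1 = Load ps)"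
proof -
  let ?t' = "Tl (l - 1)" and ?T = "Tl l"
  have l1: "l - 1 < M" using l by simp
  have tt: "?t' < ?T" using Tl_mono[of "l - 1" l] l by simp
  obtain ps' a' b' where P': "ms ! ?t' = Compute ps'" "set ps' = {(a', 2 * (l - 1)), (b', 2 * (l - 1) + 1)}"
    "a' \<noteq> b'" "a' < 2" "b' < 2"
    using Tl_props(3)[OF l1] by blast
  obtain ps a b where P: "ms ! ?T = Compute ps" "set ps = {(a, 2 * l), (b, 2 * l + 1)}"
    using Tl_props(3)[OF l(2)] by blast
  have tl': "?t' < length ms" and tl: "?T < length ms" using Tl_props(1) l1 l by auto
  have C': "computed ms ?t' = {..<2 * (l - 1)}" using Tl_props(2)[OF l1] .
  have CS': "computed ms (Suc ?t') = {..<2 * (l - 1) + 2}" using Tl_props(4)[OF l1] .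
  have e: "2 * (l - 1) = 2 * l - 2" "2 * (l - 1) + 1 = 2 * l - 1" using l by auto
  obtain u p' where up: "(p', u) \<in> set ps'" "p' \<noteq> a" "u \<in> {2 * l - 2, 2 * l - 1}"
  proof (cases "a' = a")
    case True
    then have "b' \<noteq> a" using P'(3) by simp
    moreover have "(b', 2 * l - 1) \<in> set ps'" using P'(2) e by simp
    ultimately show ?thesis using that by blast
  next
    case False
    moreover have "(a', 2 * l - 2) \<in> set ps'" using P'(2) e by simp
    ultimately show ?thesis using that by blast
  qed
  have u01: "u = 2 * l - 2 \<or> u = 2 * l - 1" using up(3) by simp
  then have ub: "2 * (l - 1) \<le> u" "u < 2 * (l - 1) + 2" using l(1) by arith+
  have uC: "u \<notin> computed ms ?t'" using ub(1) unfolding C' by simp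
  have uCS: "u \<in> computed ms (Suc ?t')" using ub(2) unfolding CS' by simp
  have nR: "u \<notin> fst (cfg ms (Suc ?t')) a"
  proof
    assume "u \<in> fst (cfg ms (Suc ?t')) a"
    then have "u \<in> fst (cfg ms ?t') a \<or> (a, u) \<in> set ps'"
      using cfg_Suc[OF tl'] P'(1) by (auto simp: apply_move_compute)
    moreover have "u \<notin> fst (cfg ms ?t') a" using ps_inv(1)[OF ps less_imp_le[OF tl'], of a] uC by blast
    moreover have "(a, u) \<notin> set ps'" using P' up by auto
    ultimately show False by blast
  qed
  have nB: "u \<notin> snd (cfg ms (Suc ?t'))"
  proof -
    have "snd (cfg ms (Suc ?t')) = snd (cfg ms ?t')"
      using cfg_Suc[OF tl'] P'(1) by (auto simp: apply_move_compute)
    then show ?thesis using ps_inv(2)[OF ps less_imp_le[OF tl']] uC by blast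
  qed
  have yR: "u \<in> fst (cfg ms ?T) a"
  proof -
    have "(a, 2 * l) \<in> set ps" using P by simp
    then have "in_nbrs EE (2 * l) \<subseteq> fst (cfg ms ?T) a" using ps_compute_ok(1)[OF ps tl P(1)] by blast
    then show ?thesis using in_nbrs_EE[of "2 * l"] l inn2 up(3) by auto
  qed
  obtain t1 ps1 where t1: "Suc ?t' \<le> t1" "t1 < ?T" "ms ! t1 = Load ps1 \<or> ms ! t1 = Compute ps1" "(a, u) \<in> set ps1"
    using acq_R[of "Suc ?t'" ?T ms u a] tt tl nR yR by auto
  have t1l: "t1 < length ms" using t1 tl by simp
  have notc: "ms ! t1 \<noteq> Compute ps1"
  proof
    assume c: "ms ! t1 = Compute ps1"
    have "u \<in> computed ms t1" using uCS computed_mono[of "Suc ?t'" t1 ms] t1 by auto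
    then have "u \<in> computed_by ms t1 a" using greedy_recomp[OF g t1l c t1(4)] by blast
    moreover have "u \<in> computed_by ms t1 p'"
    proof -
      have "u \<in> computed_by ms (Suc ?t') p'" using computed_by_Suc[of ms ?t' p'] tl' P'(1) up(1) by auto
      then show ?thesis using computed_by_mono[of "Suc ?t'" t1 ms p'] t1 by auto
    qed
    ultimately show False using greedy_disjoint[OF g] up(2) by blast
  qed
  then have ld: "ms ! t1 = Load ps1" using t1 by blast
  obtain R B where RB: "cfg ms t1 = (R, B)" by fastforce
  have "move_ok VV EE 2 (ms ! t1) (R, B)" using ps_ok[OF ps t1l] RB by simp
  then have "u \<in> snd (cfg ms t1)" using ld t1(4) RB by auto
  then obtain t0 ps0 where t0: "Suc ?t' \<le> t0" "t0 < t1" "ms ! t0 = Save ps0"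
    using acq_B[of "Suc ?t'" t1 ms u] t1 t1l nB by auto
  show ?thesis using t0 t1 ld by (intro exI[of _ t0] exI[of _ t1]) auto
qed

end


lemma ps_intro:
  assumes "\<And>t. t < length ms \<Longrightarrow> move_ok V E k (ms ! t) (cfg ms t)"
    "\<And>t. t \<le> length ms \<Longrightarrow> valid_config k r (cfg ms t)"
    "terminal_config V E k (cfg ms (length ms))"
  shows "pebbling_strategy V E k r ms"
  using assms unfolding pebbling_strategy_def cfg_def set_trace last_trace by blast

lemma opt_le: "pebbling_strategy V E k r ms \<Longrightarrow> mpp_opt V E k r g \<le> strategy_cost g ms"
  unfolding mpp_opt_def by (rule cINF_lower) auto

definition innB :: "nat \<Rightarrow> nat set" where
  "innB v = (if v < 2 then {} else {2 * (v div 2) - 2, 2 * (v div 2) - 1})"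

lemma levB: "lev M innB"
proof
  fix u v assume "u \<in> innB v"
  then show "u div 2 < v div 2" unfolding innB_def by (auto split: if_splits)
next
  fix v :: nat assume "2 \<le> v"
  then show "\<exists>u\<in>innB v. u div 2 = v div 2 - 1" unfolding innB_def
    by (intro bexI[of _ "2 * (v div 2) - 2"]) auto
qed

interpretation B: lev M innB for M by (rule levB)

definition optB :: "nat \<Rightarrow> nat move list" where
  "optB M = map (\<lambda>v. Compute [(0, v)]) [0..<2 * M]"

lemma cfg_optB: "t \<le> 2 * M \<Longrightarrow> cfg (optB M) t = ((\<lambda>j. if j = 0 then {..<t} else {}), {})"
proof (induction t)
  case 0 then show ?case by (simp add: init_config_def fun_eq_iff)
next
  case (Suc t)
  then have "t < length (optB M)" by (simp add: optB_def)
  moreover have "optB M ! t = Compute [(0, t)]" using Suc.prems by (simp add: optB_def)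
  ultimately show ?case using Suc by (auto simp: cfg_Suc fun_eq_iff)
qed

lemma optB_ps:
  assumes "2 * M \<le> r"
  shows "pebbling_strategy (B.VV M) (B.EE M) 2 r (optB M)"
proof (rule ps_intro)
  fix t assume t: "t < length (optB M)"
  then have t2: "t < 2 * M" by (simp add: optB_def)
  show "move_ok (B.VV M) (B.EE M) 2 (optB M ! t) (cfg (optB M) t)"
    using t2 cfg_optB[of t M] B.in_nbrs_EE[of M t] B.inn_less[of _ t]
    by (auto simp: optB_def multi_ok_def B.VV_def)
next
  fix t assume "t \<le> length (optB M)"
  then show "valid_config 2 r (cfg (optB M) t)"
    using cfg_optB[of t M] assms by (auto simp: valid_config_def optB_def)
next
  show "terminal_config (B.VV M) (B.EE M) 2 (cfg (optB M) (length (optB M)))"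
    using cfg_optB[of "2 * M" M] unfolding terminal_config_def is_sink_def B.VV_def
    by (auto simp: optB_def)
qed

lemma optB_cost: "strategy_cost g (optB M) = 2 * M"
  unfolding strategy_cost_def optB_def by (simp add: comp_def sum_list_triv)

lemma greedyB_lower:
  assumes g: "greedy_strategy rl (B.VV M) (B.EE M) 2 r ms" and M: "1 \<le> M"
  shows "real (strategy_cost g ms) \<ge> real (M - 1) * (2 * real g + 1)"
proof -
  interpret G: lev_greedy M innB rl r ms using levB g by (simp add: lev_greedy_def lev_greedy_axioms_def)
  let ?c = "\<lambda>t. real (move_cost g (ms ! t))"
  have nn: "\<And>t. ?c t \<ge> 0" by simp
  have W: "(\<Sum>t = Suc (G.Tl (l - 1))..<Suc (G.Tl l). ?c t) \<ge> 2 * real g + 1"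
    if l: "0 < l" "l \<le> M - 1" for l
  proof -
    have l1: "1 \<le> l" "l < M" using l by auto
    have "{2 * l - 2, 2 * l - 1} \<subseteq> innB (2 * l)" using l1 by (auto simp: innB_def)
    then obtain t0 t1 ps0 ps1 where t: "G.Tl (l - 1) < t0" "t0 < t1" "t1 < G.Tl l"
      "ms ! t0 = Save ps0" "ms ! t1 = Load ps1"
      using G.cross[OF l1] by blast
    obtain ps where "ms ! G.Tl l = Compute ps" using G.Tl_props(3)[OF l1(2)] by blast
    then have "?c (G.Tl l) = 1" by simp
    moreover have "?c t0 = g" "?c t1 = g" using t by auto
    moreover have "(\<Sum>t = Suc (G.Tl (l - 1))..<Suc (G.Tl l). ?c t) \<ge> ?c t0 + ?c t1 + ?c (G.Tl l)"
      by (rule sum_two[OF nn]) (use t in auto)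
    ultimately show ?thesis by simp
  qed
  have S: "(\<Sum>t = Suc (G.Tl 0)..<Suc (G.Tl (M - 1)). ?c t) \<ge> real (M - 1 - 0) * (2 * real g + 1)"
  proof (rule sum_windows[of ?c 0 "M - 1" G.Tl])
    show "\<And>l. 0 \<le> l \<Longrightarrow> l < M - 1 \<Longrightarrow> G.Tl l < G.Tl (Suc l)" using G.Tl_lt by simp
  qed (use W in auto)
  have "Suc (G.Tl (M - 1)) \<le> length ms" using G.Tl_props(1)[of "M - 1"] M by simp
  then have "(\<Sum>t = Suc (G.Tl 0)..<Suc (G.Tl (M - 1)). ?c t) \<le> (\<Sum>t = 0..<length ms. ?c t)"
    by (intro sum_mono2) auto
  then show ?thesis using S strategy_cost_sum[of g ms] by simp
qed


lemma arithB:
  fixes g M :: real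
  assumes "g \<ge> 2" "M \<ge> 6 * g + 3"
  shows "(M - 1) * (2 * g + 1) \<ge> (1 + 2 / 3 * g) * (2 * M)"
proof -
  have a: "2 / 3 * g - 1 \<ge> 0" using assms by simp
  have "M * (2 / 3 * g - 1) \<ge> (6 * g + 3) * (2 / 3 * g - 1)"
    using mult_right_mono[OF assms(2) a] by simp
  moreover have "(6 * g + 3) * (2 / 3 * g - 1) \<ge> 2 * g + 1"
  proof -
    have "(6 * g + 3) * (2 / 3 * g - 1) - (2 * g + 1) = 2 * (2 * g + 1) * (g - 2)"
      by (simp add: algebra_simps)
    moreover have "2 * (2 * g + 1) * (g - 2) \<ge> 0" using assms by simp
    ultimately have "(6 * g + 3) * (2 / 3 * g - 1) - (2 * g + 1) \<ge> 0" by simp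
    then show ?thesis by simp
  qed
  ultimately have "M * (2 / 3 * g - 1) \<ge> 2 * g + 1" by linarith
  then show ?thesis by (simp add: algebra_simps)
qed

theorem partB:
  "\<forall>g :: nat. g \<ge> 2 \<longrightarrow>
      (\<exists>(V :: nat \<Rightarrow> nat set) (E :: nat \<Rightarrow> (nat \<times> nat) set) (r :: nat \<Rightarrow> nat).
         (\<forall>N. is_dag (V N) (E N) \<and> r N \<ge> card (V N)) \<and>
         filterlim (\<lambda>N. card (V N)) at_top sequentially \<and>
         (\<forall>\<epsilon> > 0. \<forall>\<^sub>F N in sequentially. \<forall>ms. greedy_strategy rl (V N) (E N) 2 (r N) ms \<longrightarrow>
            real (strategy_cost g ms) \<ge> (1 + 2 / 3 * real g - \<epsilon>) * real (mpp_opt (V N) (E N) 2 (r N) g)))"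
proof (intro allI impI)
  fix g :: nat assume g2: "g \<ge> 2"
  define Mf where "Mf N = N + 6 * g + 3" for N
  define V where "V N = B.VV (Mf N)" for N
  define E where "E N = B.EE (Mf N)" for N
  define r where "r N = 2 * Mf N" for N
  have card: "card (V N) = 2 * Mf N" for N unfolding V_def by (rule B.card_VV)
  have main: "real (strategy_cost g ms) \<ge> (1 + 2 / 3 * real g - \<epsilon>) * real (mpp_opt (V N) (E N) 2 (r N) g)"
    if gs: "greedy_strategy rl (V N) (E N) 2 (r N) ms" and e: "\<epsilon> > 0" for N ms \<epsilon>
  proof -
    have M1: "1 \<le> Mf N" unfolding Mf_def by simp
    have lo: "real (strategy_cost g ms) \<ge> real (Mf N - 1) * (2 * real g + 1)"
      using greedyB_lower[OF gs[unfolded V_def E_def] M1] .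
    have "pebbling_strategy (V N) (E N) 2 (r N) (optB (Mf N))"
      unfolding V_def E_def r_def by (rule optB_ps) simp
    then have "mpp_opt (V N) (E N) 2 (r N) g \<le> 2 * Mf N"
      using opt_le optB_cost by metis
    then have op: "real (mpp_opt (V N) (E N) 2 (r N) g) \<le> 2 * real (Mf N)" by linarith
    have ar: "(real (Mf N) - 1) * (2 * real g + 1) \<ge> (1 + 2 / 3 * real g) * (2 * real (Mf N))"
      by (rule arithB) (use g2 in \<open>auto simp: Mf_def\<close>)
    have "real (Mf N - 1) = real (Mf N) - 1" using M1 by simp
    have c0: "1 + 2 / 3 * real g \<ge> 0" by simp
    have "(1 + 2 / 3 * real g - \<epsilon>) * real (mpp_opt (V N) (E N) 2 (r N) g)
          \<le> (1 + 2 / 3 * real g) * real (mpp_opt (V N) (E N) 2 (r N) g)"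
      using e by (simp add: mult_right_mono)
    also have "\<dots> \<le> (1 + 2 / 3 * real g) * (2 * real (Mf N))"
      using op c0 by (rule mult_left_mono)
    also have "\<dots> \<le> (real (Mf N) - 1) * (2 * real g + 1)" by (rule ar)
    also have "\<dots> \<le> real (strategy_cost g ms)" using lo \<open>real (Mf N - 1) = real (Mf N) - 1\<close> by simp
    finally show ?thesis .
  qed
  show "\<exists>(V :: nat \<Rightarrow> nat set) (E :: nat \<Rightarrow> (nat \<times> nat) set) (r :: nat \<Rightarrow> nat).
         (\<forall>N. is_dag (V N) (E N) \<and> r N \<ge> card (V N)) \<and>
         filterlim (\<lambda>N. card (V N)) at_top sequentially \<and>
         (\<forall>\<epsilon> > 0. \<forall>\<^sub>F N in sequentially. \<forall>ms. greedy_strategy rl (V N) (E N) 2 (r N) ms \<longrightarrow>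
            real (strategy_cost g ms) \<ge> (1 + 2 / 3 * real g - \<epsilon>) * real (mpp_opt (V N) (E N) 2 (r N) g))"
  proof (intro exI conjI allI impI)
    fix N show "is_dag (V N) (E N)" unfolding V_def E_def by (rule B.dag)
    show "r N \<ge> card (V N)" using card r_def by simp
  next
    show "filterlim (\<lambda>N. card (V N)) at_top sequentially"
      unfolding filterlim_at_top eventually_sequentially card
    proof
      fix Z :: nat show "\<exists>N0. \<forall>n\<ge>N0. Z \<le> 2 * Mf n" by (intro exI[of _ Z]) (auto simp: Mf_def)
    qed
  next
    fix \<epsilon> :: real assume "\<epsilon> > 0"
    then show "\<forall>\<^sub>F N in sequentially. \<forall>ms. greedy_strategy rl (V N) (E N) 2 (r N) ms \<longrightarrow>
            real (strategy_cost g ms) \<ge> (1 + 2 / 3 * real g - \<epsilon>) * real (mpp_opt (V N) (E N) 2 (r N) g)"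
      using main by (simp add: always_eventually)
  qed
qed


definition SA :: "nat \<Rightarrow> nat \<Rightarrow> nat set" where
  "SA D x = (\<lambda>i. 2 * i + x) ` {..<D}"

lemma SA_iff: "x < 2 \<Longrightarrow> v \<in> SA D x \<longleftrightarrow> v < 2 * D \<and> v mod 2 = x"
proof
  assume "x < 2" "v \<in> SA D x"
  then show "v < 2 * D \<and> v mod 2 = x" unfolding SA_def by auto
next
  assume x: "x < 2" and "v < 2 * D \<and> v mod 2 = x"
  then have "v = 2 * (v div 2) + x" "v div 2 < D" by auto
  then show "v \<in> SA D x" unfolding SA_def by blast
qed

lemma SA_less: "v \<in> SA D x \<Longrightarrow> x < 2 \<Longrightarrow> v < 2 * D"
  using SA_iff by blast

lemma card_SA: "card (SA D x) = D"
proof -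
  have "inj_on (\<lambda>i. 2 * i + x) {..<D}" by (rule inj_onI) simp
  then show ?thesis unfolding SA_def by (simp add: card_image)
qed

lemma finite_SA[simp]: "finite (SA D x)" unfolding SA_def by simp

lemma SA_disj: "SA D 0 \<inter> SA D 1 = {}"
  using SA_iff[of 0] SA_iff[of 1] by auto

definition innA :: "nat \<Rightarrow> nat \<Rightarrow> nat set" where
  "innA D v = (if v < 2 * D then (if v < 2 then {} else {v - 2})
     else if v div 2 = D then SA D 0
     else if v div 2 = D + 1 then insert (2 * D) (SA D 1)
     else insert (2 * (v div 2) - 2) (insert (2 * (v div 2) - 3) (SA D ((v div 2 - D) mod 2))))"

lemma innA_chain: "D + 2 \<le> v div 2 \<Longrightarrow>
   innA D v = insert (2 * (v div 2) - 2) (insert (2 * (v div 2) - 3) (SA D ((v div 2 - D) mod 2)))"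
  unfolding innA_def by auto

lemma levA: "lev (D + L) (innA D)"
proof
  fix u v assume u: "u \<in> innA D v"
  show "u div 2 < v div 2"
  proof (cases "v < 2 * D")
    case True then show ?thesis using u unfolding innA_def by (auto split: if_splits)
  next
    case False
    then have vD: "D \<le> v div 2" by auto
    have S: "u \<in> SA D x \<Longrightarrow> x < 2 \<Longrightarrow> u div 2 < D" for x using SA_less[of u D x] by auto
    show ?thesis
    proof (cases "v div 2 = D")
      case True then show ?thesis using u False S[of 0] unfolding innA_def by auto
    next
      case F2: False
      show ?thesis
      proof (cases "v div 2 = D + 1")
        case True then show ?thesis using u False S[of 1] unfolding innA_def by auto
      next
        case F3: False
        then have "D + 2 \<le> v div 2" using vD F2 by simp
        then have "u = 2 * (v div 2) - 2 \<or> u = 2 * (v div 2) - 3 \<or> u \<in> SA D ((v div 2 - D) mod 2)"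
          using u innA_chain by auto
        then show ?thesis using S[of "(v div 2 - D) mod 2"] \<open>D + 2 \<le> v div 2\<close> by auto
      qed
    qed
  qed
next
  fix v :: nat assume v2: "2 \<le> v"
  show "\<exists>u\<in>innA D v. u div 2 = v div 2 - 1"
  proof (cases "v < 2 * D")
    case True then show ?thesis using v2 unfolding innA_def by auto
  next
    case False
    then have vD: "D \<le> v div 2" by auto
    show ?thesis
    proof (cases "v div 2 = D")
      case True
      then have "D \<ge> 1" using v2 by auto
      then have "2 * (D - 1) \<in> SA D 0" using SA_iff[of 0 "2 * (D - 1)" D] by auto
      then show ?thesis using True False unfolding innA_def by (intro bexI[of _ "2 * (D - 1)"]) auto
    next
      case F2: False
      show ?thesis
      proof (cases "v div 2 = D + 1")
        case True then show ?thesis using False unfolding innA_def by auto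
      next
        case F3: False
        then have "D + 2 \<le> v div 2" using vD F2 by simp
        then show ?thesis using innA_chain[of D v] by (intro bexI[of _ "2 * (v div 2) - 2"]) auto
      qed
    qed
  qed
qed

interpretation A: lev "D + L" "innA D" for D L by (rule levA)

lemma card_innA_le: "card (innA D v) \<le> D + 2"
proof -
  have c1: "card (insert a (SA D x)) \<le> D + 1" for a x
    using card_insert_le_m1[of "D + 1" "SA D x" a] card_SA[of D x]
    by (metis card_insert_if finite_SA le_SucI le_refl Suc_eq_plus1)
  have c2: "card (insert a (insert b (SA D x))) \<le> D + 2" for a b x
    using c1[of b x] by (metis card_insert_if finite_SA finite_insert le_SucI Suc_eq_plus1 add_Suc_right
        Suc_le_mono numeral_2_eq_2 One_nat_def add_Suc)
  have c0: "card (SA D x) \<le> D + 2" for x by (simp add: card_SA)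
  have c1': "card (insert a (SA D x)) \<le> D + 2" for a x using c1[of a x] by simp
  have c3: "card {u} \<le> D + 2" for u :: nat by simp
  show ?thesis unfolding innA_def
    using c0 c1' c2 c3 by (simp split: if_split)
qed

lemma chain_notin_SA: "2 * D \<le> w \<Longrightarrow> x < 2 \<Longrightarrow> w \<notin> SA D x"
  using SA_less by fastforce

lemma card_innA_chain:
  assumes "D + 2 \<le> w div 2"
  shows "card (innA D w) = D + 2" "w \<notin> innA D w" "card (insert w (innA D w)) = D + 3"
proof -
  let ?a = "2 * (w div 2) - 2" and ?b = "2 * (w div 2) - 3" and ?x = "(w div 2 - D) mod 2"
  have x2: "?x < 2" by simp
  have ab: "?a \<noteq> ?b" using assms by simp
  have aS: "?a \<notin> SA D ?x" by (rule chain_notin_SA) (use assms in auto)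
  have bS: "?b \<notin> SA D ?x" by (rule chain_notin_SA) (use assms in auto)
  have wS: "w \<notin> SA D ?x" by (rule chain_notin_SA) (use assms in auto)
  have e: "innA D w = insert ?a (insert ?b (SA D ?x))" by (rule innA_chain[OF assms])
  show "card (innA D w) = D + 2" using ab aS bS card_SA[of D ?x] e by simp
  show "w \<notin> innA D w" using wS assms e by auto
  then show "card (insert w (innA D w)) = D + 3" using \<open>card (innA D w) = D + 2\<close> e by simp
qed

lemma maxA:
  assumes "3 \<le> L"
  shows "max_indeg (A.VV D L) (A.EE D L) = D + 2"
proof -
  let ?f = "\<lambda>v. card (in_nbrs (A.EE D L) v)"
  have le: "?f v \<le> D + 2" for v using card_innA_le[of D v] A.in_nbrs_EE[of D L v] by auto
  let ?w = "2 * (D + 2)"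
  have wV: "?w \<in> A.VV D L" using assms unfolding A.VV_def by simp
  have "?f ?w = D + 2" using card_innA_chain(1)[of D ?w] A.in_nbrs_EE[of D L ?w] assms by simp
  moreover have "finite (?f ` A.VV D L)" unfolding A.VV_def by simp
  moreover have "D + 2 \<in> ?f ` A.VV D L" using wV calculation(1) by (metis image_eqI)
  ultimately show ?thesis unfolding max_indeg_def
    using le by (intro Max_eqI) auto
qed


lemma div2_less: "(w::nat) div 2 < n \<Longrightarrow> w < 2 * n"
  by linarith

lemma window_one:
  fixes c :: "nat \<Rightarrow> real" and S :: "nat set"
  assumes fin: "finite S" and nn: "\<And>t. c t \<ge> 0"
    and ex: "\<And>s. s \<in> S \<Longrightarrow> \<exists>t. a \<le> t \<and> t < b \<and> P s t"
    and inj: "\<And>s s' t. s \<in> S \<Longrightarrow> s' \<in> S \<Longrightarrow> P s t \<Longrightarrow> P s' t \<Longrightarrow> s = s'"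
    and lb: "\<And>s t. s \<in> S \<Longrightarrow> P s t \<Longrightarrow> c t \<ge> f s"
  shows "(\<Sum>s\<in>S. f s) \<le> (\<Sum>t = a..<b. c t)"
proof -
  define \<tau> where "\<tau> s = (SOME t. a \<le> t \<and> t < b \<and> P s t)" for s
  have \<tau>: "a \<le> \<tau> s \<and> \<tau> s < b \<and> P s (\<tau> s)" if "s \<in> S" for s
    unfolding \<tau>_def by (rule someI_ex) (use ex that in blast)
  have "inj_on \<tau> S"
  proof (rule inj_onI)
    fix s s' assume "s \<in> S" "s' \<in> S" "\<tau> s = \<tau> s'"
    then have "P s (\<tau> s)" "P s' (\<tau> s)" using \<tau>[of s] \<tau>[of s'] by auto
    then show "s = s'" using inj[of s s' "\<tau> s"] \<open>s \<in> S\<close> \<open>s' \<in> S\<close> by blast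
  qed
  have "(\<Sum>s\<in>S. f s) \<le> (\<Sum>s\<in>S. c (\<tau> s))" using lb \<tau> by (intro sum_mono) blast
  also have "\<dots> = (\<Sum>t\<in>\<tau> ` S. c t)" using \<open>inj_on \<tau> S\<close> by (simp add: sum.reindex)
  also have "\<dots> \<le> (\<Sum>t = a..<b. c t)" using \<tau> nn by (intro sum_mono2) auto
  finally show ?thesis .
qed

lemma greedyA_window:
  assumes g: "greedy_strategy rl (A.VV D L) (A.EE D L) 2 (D + 3) ms"
    and j: "3 \<le> j" "j < L" and g1: "1 \<le> gg"
  shows "(\<Sum>t = Suc (lev_greedy.Tl ms (D + j - 1))..<Suc (lev_greedy.Tl ms (D + j)).
            real (move_cost gg (ms ! t))) \<ge> real D * (real gg + 1) / 2 + 1"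
proof -
  interpret G: lev_greedy "D + L" "innA D" rl "D + 3" ms
    using levA g by (simp add: lev_greedy_def lev_greedy_axioms_def)
  let ?c = "\<lambda>t. real (move_cost gg (ms ! t))"
  let ?l = "D + j"
  let ?t' = "G.Tl (?l - 1)" and ?T = "G.Tl ?l"
  let ?x = "j mod 2" and ?y = "(j - 1) mod 2"
  let ?S = "SA D ?x"
  let ?CB = "\<lambda>q. computed_by ms (length ms) q"
  let ?f = "\<lambda>q s. if s \<in> ?CB q then 1 else real gg"
  have l1: "?l - 1 < D + L" and l: "?l < D + L" using j by auto
  have tt: "?t' < ?T" using G.Tl_mono[of "?l - 1" ?l] j by simp
  have tl': "?t' < length ms" and tl: "?T < length ms" using G.Tl_props(1) l1 l by auto
  obtain ps' a' b' where P': "ms ! ?t' = Compute ps'" "set ps' = {(a', 2 * (?l - 1)), (b', 2 * (?l - 1) + 1)}"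
    "a' \<noteq> b'" "a' < 2" "b' < 2"
    using G.Tl_props(3)[OF l1] by blast
  obtain ps a b where P: "ms ! ?T = Compute ps" "set ps = {(a, 2 * ?l), (b, 2 * ?l + 1)}"
    "a \<noteq> b" "a < 2" "b < 2"
    using G.Tl_props(3)[OF l] by blast
  have xy: "?x \<noteq> ?y"
  proof -
    obtain k where "j = Suc k" using j by (cases j) auto
    then show ?thesis by (simp add: mod_Suc)
  qed
  have C': "computed ms ?t' = {..<2 * (?l - 1)}" using G.Tl_props(2)[OF l1] .
  have perq: "(\<Sum>s\<in>?S. ?f q s) \<le> (\<Sum>t = Suc ?t'..<?T. ?c t)" if q: "q < 2" for q
  proof -
    obtain w where w: "(q, w) \<in> set ps'" "w div 2 = ?l - 1"
      using P' q by (cases "q = a'") (auto intro: that[of "2 * (?l - 1)"] that[of "2 * (?l - 1) + 1"])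
    have wc: "D + 2 \<le> w div 2" using w j by simp
    have win: "innA D w = insert (2 * (w div 2) - 2) (insert (2 * (w div 2) - 3) (SA D ?y))"
      using innA_chain[OF wc] w j by (simp add: Suc_diff_le)
    have wV: "w < 2 * (D + L)" using w(2) j by (intro div2_less) simp
    have sub1: "innA D w \<subseteq> fst (cfg ms ?t') q"
      using ps_compute_ok(1)[OF G.ps tl' P'(1) w(1)] A.in_nbrs_EE[of D L w] wV by simp
    have R': "fst (cfg ms (Suc ?t')) q = fst (cfg ms ?t') q \<union> {v. (q, v) \<in> set ps'}"
      using cfg_Suc[OF tl'] P'(1) by (simp add: apply_move_compute)
    have sub: "insert w (innA D w) \<subseteq> fst (cfg ms (Suc ?t')) q" using sub1 R' w(1) by auto
    have fin: "finite (fst (cfg ms (Suc ?t')) q)"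
    proof -
      have "fst (cfg ms (Suc ?t')) q \<subseteq> A.VV D L"
        using ps_inv(1)[OF G.ps, of "Suc ?t'" q] ps_inv(3)[OF G.ps, of "Suc ?t'"] tl' by auto
      then show ?thesis unfolding A.VV_def using finite_subset by blast
    qed
    have "card (fst (cfg ms (Suc ?t')) q) \<le> D + 3"
      using ps_valid[OF G.ps, of "Suc ?t'"] tl' q unfolding valid_config_def by auto
    then have eq: "fst (cfg ms (Suc ?t')) q = insert w (innA D w)"
      using card_subset_eq[OF fin sub] card_innA_chain(3)[OF wc] card_mono[OF fin sub] by simp
    have disj: "s \<notin> fst (cfg ms (Suc ?t')) q" if "s \<in> ?S" for s
    proof -
      have s: "s < 2 * D" "s mod 2 = ?x" using SA_iff[of ?x s D] that by auto
      have "s \<notin> SA D ?y" using SA_iff[of ?y s D] s xy by auto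
      moreover have "s \<noteq> w" "s \<noteq> 2 * (w div 2) - 2" "s \<noteq> 2 * (w div 2) - 3" using s wc by auto
      ultimately show ?thesis unfolding eq win by auto
    qed
    obtain w' where w': "(q, w') \<in> set ps" "w' div 2 = ?l"
      using P q by (cases "q = a") (auto intro: that[of "2 * ?l"] that[of "2 * ?l + 1"])
    have w'V: "w' < 2 * (D + L)" using w'(2) j by (intro div2_less) simp
    have "innA D w' \<subseteq> fst (cfg ms ?T) q"
      using ps_compute_ok(1)[OF G.ps tl P(1) w'(1)] A.in_nbrs_EE[of D L w'] w'V by simp
    moreover have "?S \<subseteq> innA D w'" using innA_chain[of D w'] w' j by auto
    ultimately have inT: "?S \<subseteq> fst (cfg ms ?T) q" by blast
    let ?P = "\<lambda>s t. Suc ?t' \<le> t \<and> t < length ms \<and> (\<exists>ps. (ms ! t = Load ps \<or> ms ! t = Compute ps) \<and> (q, s) \<in> set ps)"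
    show ?thesis
    proof (rule window_one[where P = ?P])
      show "finite ?S" by simp
      show "\<And>t. 0 \<le> ?c t" by simp
    next
      fix s assume "s \<in> ?S"
      then obtain t where "Suc ?t' \<le> t" "t < ?T" "\<exists>ps. (ms ! t = Load ps \<or> ms ! t = Compute ps) \<and> (q, s) \<in> set ps"
        using acq_R[of "Suc ?t'" ?T ms s q] tt tl disj inT by auto
      then show "\<exists>t. Suc ?t' \<le> t \<and> t < ?T \<and> ?P s t" using tl by auto
    next
      fix s s' t
      assume "?P s t" "?P s' t"
      then obtain ps1 ps2 where p1: "t < length ms" "ms ! t = Load ps1 \<or> ms ! t = Compute ps1" "(q, s) \<in> set ps1"
        and p2: "ms ! t = Load ps2 \<or> ms ! t = Compute ps2" "(q, s') \<in> set ps2"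
        by blast
      have "ps1 = ps2" using p1(2) p2(1) by auto
      moreover have "distinct (map fst ps1)"
        using p1(2) ps_multi_ok[OF G.ps p1(1), of ps1] by (auto simp: multi_ok_def)
      ultimately show "s = s'" using distinct_fst_eq p1(3) p2(2) by metis
    next
      fix s t assume sS: "s \<in> ?S" and Pt: "?P s t"
      then obtain ps1 where p1: "Suc ?t' \<le> t" "t < length ms" "ms ! t = Load ps1 \<or> ms ! t = Compute ps1" "(q, s) \<in> set ps1"
        by blast
      show "?f q s \<le> ?c t"
      proof (cases "ms ! t = Compute ps1")
        case True
        have "s < 2 * D" using SA_iff[of ?x s D] sS by auto
        then have "s \<in> computed ms ?t'" using C' j by auto
        then have "s \<in> computed ms t" using computed_mono[of ?t' t ms] p1(1) by auto
        then have "s \<in> computed_by ms t q" using greedy_recomp[OF g p1(2) True p1(4)] by blast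
        then have "s \<in> ?CB q" using computed_by_mono[of t "length ms" ms q] p1(2) by auto
        then show ?thesis using True by simp
      next
        case False
        then have "ms ! t = Load ps1" using p1(3) by blast
        then show ?thesis using g1 by simp
      qed
    qed
  qed
  have comb: "real D * (real gg + 1) \<le> (\<Sum>s\<in>?S. ?f 0 s) + (\<Sum>s\<in>?S. ?f 1 s)"
  proof -
    have "?f 0 s + ?f 1 s \<ge> real gg + 1" if "s \<in> ?S" for s
    proof -
      have "\<not> (s \<in> ?CB 0 \<and> s \<in> ?CB 1)" using greedy_disjoint[OF g, of s "length ms" 0 1] by auto
      then show ?thesis using g1 by auto
    qed
    then have "(\<Sum>s\<in>?S. real gg + 1) \<le> (\<Sum>s\<in>?S. ?f 0 s + ?f 1 s)" by (intro sum_mono) auto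
    then show ?thesis by (simp add: sum.distrib card_SA)
  qed
  have X: "real D * (real gg + 1) / 2 \<le> (\<Sum>t = Suc ?t'..<?T. ?c t)"
    using comb perq[of 0] perq[of 1] by simp
  have "(\<Sum>t = Suc ?t'..<Suc ?T. ?c t) = (\<Sum>t = Suc ?t'..<?T. ?c t) + ?c ?T"
    using tt by simp
  moreover have "?c ?T = 1" using P(1) by simp
  ultimately show ?thesis using X by linarith
qed


fun run :: "'v set \<Rightarrow> ('v \<times> 'v) set \<Rightarrow> nat \<Rightarrow> nat \<Rightarrow> 'v config \<Rightarrow> 'v move list \<Rightarrow> bool" where
  "run V E k r C [] = valid_config k r C"
| "run V E k r C (m # ms) = (valid_config k r C \<and> move_ok V E k m C \<and> run V E k r (apply_move m C) ms)"

lemma run_append: "run V E k r C (xs @ ys) = (run V E k r C xs \<and> run V E k r (fold apply_move xs C) ys)"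
proof (induction xs arbitrary: C)
  case Nil
  show ?case by (cases ys) auto
next
  case (Cons m xs) then show ?case by auto
qed

lemma run_trace: "run V E k r C ms \<Longrightarrow>
   (\<forall>i<length ms. move_ok V E k (ms ! i) (trace C ms ! i)) \<and> (\<forall>C'\<in>set (trace C ms). valid_config k r C')
   \<and> last (trace C ms) = fold apply_move ms C"
proof (induction ms arbitrary: C)
  case Nil then show ?case by simp
next
  case (Cons m ms)
  have IH: "(\<forall>i<length ms. move_ok V E k (ms ! i) (trace (apply_move m C) ms ! i)) \<and>
      (\<forall>C'\<in>set (trace (apply_move m C) ms). valid_config k r C') \<and>
      last (trace (apply_move m C) ms) = fold apply_move ms (apply_move m C)"
    using Cons.IH[of "apply_move m C"] Cons.prems by simp
  have ne: "trace (apply_move m C) ms \<noteq> []" by (metis length_trace list.size(3) nat.distinct(1))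
  have A: "\<forall>i<length (m # ms). move_ok V E k ((m # ms) ! i) (trace C (m # ms) ! i)"
  proof (intro allI impI)
    fix i assume "i < length (m # ms)"
    then show "move_ok V E k ((m # ms) ! i) (trace C (m # ms) ! i)"
      using IH Cons.prems by (cases i) auto
  qed
  show ?case using A IH Cons.prems ne by auto
qed

lemma run_ps: "run V E k r init_config ms \<Longrightarrow> terminal_config V E k (fold apply_move ms init_config)
   \<Longrightarrow> pebbling_strategy V E k r ms"
  unfolding pebbling_strategy_def using run_trace by metis

definition mk :: "nat \<Rightarrow> 'v set \<Rightarrow> 'v set \<Rightarrow> 'v set \<Rightarrow> 'v config" where
  "mk x X Y B = ((\<lambda>i. if i = x then X else if i = 1 - x then Y else {}), B)"

lemma mk_swap: "x < 2 \<Longrightarrow> mk x X Y B = mk (1 - x) Y X B"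
  unfolding mk_def by (cases "x = 0") (auto simp: fun_eq_iff)

lemma mk_compute: "x < 2 \<Longrightarrow> apply_move (Compute [(x, v)]) (mk x X Y B) = mk x (insert v X) Y B"
  unfolding mk_def by (auto simp: fun_eq_iff)
lemma mk_load: "x < 2 \<Longrightarrow> apply_move (Load [(x, v)]) (mk x X Y B) = mk x (insert v X) Y B"
  unfolding mk_def by (auto simp: fun_eq_iff)
lemma mk_save: "x < 2 \<Longrightarrow> apply_move (Save [(x, v)]) (mk x X Y B) = mk x X Y (insert v B)"
  unfolding mk_def by auto
lemma mk_del: "x < 2 \<Longrightarrow> apply_move (DelRed x v) (mk x X Y B) = mk x (X - {v}) Y B"
  unfolding mk_def by (auto simp: fun_eq_iff)
lemma mk_compute2: "apply_move (Compute [(0, a), (1, b)]) (mk 0 X Y B) = mk 0 (insert a X) (insert b Y) B"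
  unfolding mk_def by (auto simp: fun_eq_iff)

lemma mk_ok_compute: "x < 2 \<Longrightarrow> move_ok V E 2 (Compute [(x, v)]) (mk x X Y B) \<longleftrightarrow> v \<in> V \<and> in_nbrs E v \<subseteq> X"
  unfolding mk_def by (auto simp: multi_ok_def)
lemma mk_ok_load: "x < 2 \<Longrightarrow> move_ok V E 2 (Load [(x, v)]) (mk x X Y B) \<longleftrightarrow> v \<in> B"
  unfolding mk_def by (auto simp: multi_ok_def)
lemma mk_ok_save: "x < 2 \<Longrightarrow> move_ok V E 2 (Save [(x, v)]) (mk x X Y B) \<longleftrightarrow> v \<in> X"
  unfolding mk_def by (auto simp: multi_ok_def)
lemma mk_ok_del: "x < 2 \<Longrightarrow> move_ok V E 2 (DelRed x v) (mk x X Y B) \<longleftrightarrow> v \<in> X"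
  unfolding mk_def by auto
lemma mk_ok_compute2: "move_ok V E 2 (Compute [(0, a), (1, b)]) (mk 0 X Y B) \<longleftrightarrow>
    a \<in> V \<and> in_nbrs E a \<subseteq> X \<and> b \<in> V \<and> in_nbrs E b \<subseteq> Y"
  unfolding mk_def by (auto simp: multi_ok_def)
lemma mk_valid: "x < 2 \<Longrightarrow> valid_config 2 r (mk x X Y B) \<longleftrightarrow> card X \<le> r \<and> card Y \<le> r"
  unfolding mk_def valid_config_def by (auto simp: less_2_cases_iff)

lemma init_mk: "init_config = mk 0 {} {} {}"
  unfolding mk_def init_config_def by (auto simp: fun_eq_iff)


definition UU :: "nat \<Rightarrow> nat \<Rightarrow> nat" where "UU D j = 2 * (D + j)"
definition WW :: "nat \<Rightarrow> nat \<Rightarrow> nat" where "WW D j = 2 * (D + j) + 1"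

definition lvj :: "nat \<Rightarrow> nat \<Rightarrow> nat move list" where
  "lvj D j = (let x = j mod 2 in
     [Load [(x, UU D (j - 1))], Compute [(x, UU D j)], Save [(x, UU D j)], DelRed x (UU D j),
      Compute [(x, WW D j)], DelRed x (UU D (j - 1)), DelRed x (WW D (j - 2))])"

definition stA :: "nat \<Rightarrow> nat \<Rightarrow> nat config" where
  "stA D j = mk (j mod 2) (insert (WW D (j - 2)) (SA D (j mod 2))) (insert (WW D (j - 1)) (SA D (1 - j mod 2)))
     (UU D ` {..<j})"

lemma notin_SA_big: "2 * D \<le> w \<Longrightarrow> y < 2 \<Longrightarrow> w \<notin> SA D y"
  unfolding SA_def by auto

lemma card_ins_le: "finite X \<Longrightarrow> card (insert a X) \<le> card X + 1"
  by (simp add: card_insert_if)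

lemma lvj_run:
  assumes j: "2 \<le> j" "j < L"
  shows "run (A.VV D L) (A.EE D L) 2 (D + 3) (stA D j) (lvj D j) \<and>
         fold apply_move (lvj D j) (stA D j) = stA D (Suc j)"
proof -
  define x where "x = j mod 2"
  have x2: "x < 2" unfolding x_def by simp
  define a where "a = UU D (j - 1)"
  define b where "b = WW D (j - 2)"
  define u where "u = UU D j"
  define w where "w = WW D j"
  define c where "c = WW D (j - 1)"
  define S where "S = SA D x"
  define T where "T = SA D (1 - x)"
  define B0 where "B0 = UU D ` {..<j}"
  have st: "stA D j = mk x (insert b S) (insert c T) B0"
    unfolding stA_def x_def b_def c_def S_def T_def B0_def by simp
  have dist: "a \<noteq> b" "a \<noteq> u" "a \<noteq> w" "b \<noteq> u" "b \<noteq> w" "u \<noteq> w"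
    unfolding a_def b_def u_def w_def UU_def WW_def using j by auto
  have big: "\<And>v. 2 * D \<le> v \<Longrightarrow> v \<notin> S" using notin_SA_big x2 unfolding S_def by blast
  have nS: "a \<notin> S" "b \<notin> S" "u \<notin> S" "w \<notin> S"
    by (rule big; unfold a_def b_def u_def w_def UU_def WW_def; use j in simp)+
  have cS: "card S = D" "card T = D" "finite S" "finite T" unfolding S_def T_def by (auto simp: card_SA)
  have cT: "card (insert c T) \<le> D + 3" using card_ins_le[OF cS(4), of c] cS by simp
  have aB: "a \<in> B0" unfolding a_def B0_def using j by auto
  have V: "u \<in> A.VV D L" "w \<in> A.VV D L" unfolding u_def w_def A.VV_def UU_def WW_def using j by auto
  have a_eq: "2 * (D + j) - 2 = a" unfolding a_def UU_def using j by simp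
  have b_eq: "2 * (D + j) - 3 = b" unfolding b_def WW_def using j by simp
  have inu: "in_nbrs (A.EE D L) u = insert a (insert b S)"
  proof -
    have ul: "u < 2 * (D + L)" using V unfolding A.VV_def by simp
    have ud: "u div 2 = D + j" unfolding u_def UU_def by simp
    have "innA D u = insert a (insert b S)"
      using innA_chain[of D u] j unfolding ud a_eq b_eq S_def x_def by simp
    then show ?thesis using A.in_nbrs_EE[of D L u] ul by simp
  qed
  have inw: "in_nbrs (A.EE D L) w = insert a (insert b S)"
  proof -
    have wl: "w < 2 * (D + L)" using V unfolding A.VV_def by simp
    have wd: "w div 2 = D + j" unfolding w_def WW_def by simp
    have "innA D w = insert a (insert b S)"
      using innA_chain[of D w] j unfolding wd a_eq b_eq S_def x_def by simp
    then show ?thesis using A.in_nbrs_EE[of D L w] wl by simp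
  qed
  have c3: "card (insert a (insert b S)) \<le> D + 3" "card (insert u (insert a (insert b S))) \<le> D + 3"
    "card (insert w (insert a (insert b S))) \<le> D + 3" "card (insert b S) \<le> D + 3"
    "card (insert w (insert b S)) \<le> D + 3" "card (insert w S) \<le> D + 3"
    using cS nS dist by (auto simp: card_insert_if)
  have e1: "insert u (insert a (insert b S)) - {u} = insert a (insert b S)" using dist nS by auto
  have e2: "insert w (insert a (insert b S)) - {a} = insert w (insert b S)" using dist nS by auto
  have e3: "insert w (insert b S) - {b} = insert w S" using dist nS by auto
  have lv: "lvj D j = [Load [(x, a)], Compute [(x, u)], Save [(x, u)], DelRed x u,
      Compute [(x, w)], DelRed x a, DelRed x b]"
    unfolding lvj_def Let_def x_def a_def u_def w_def b_def by simp
  have R: "run (A.VV D L) (A.EE D L) 2 (D + 3) (stA D j) (lvj D j)"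
    unfolding st lv using x2 cT c3 aB V inu inw e1 e2 e3
    by (simp add: mk_compute mk_load mk_save mk_del mk_ok_compute mk_ok_load mk_ok_save mk_ok_del mk_valid)
  have F: "fold apply_move (lvj D j) (stA D j) = mk x (insert w S) (insert c T) (insert u B0)"
    unfolding st lv using x2 e1 e2 e3 by (simp add: mk_compute mk_load mk_save mk_del)
  have "stA D (Suc j) = mk x (insert w S) (insert c T) (insert u B0)"
  proof -
    have sx: "Suc j mod 2 = 1 - x" "1 - Suc j mod 2 = x" unfolding x_def by presburger+
    have "stA D (Suc j) = mk (1 - x) (insert c T) (insert w S) (UU D ` {..<Suc j})"
    proof -
      have xx: "1 - (1 - x) = x" using x2 by arith
      show ?thesis unfolding stA_def sx c_def w_def S_def T_def using j xx by (simp add: numeral_2_eq_2)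
    qed
    also have "\<dots> = mk x (insert w S) (insert c T) (UU D ` {..<Suc j})"
      using mk_swap[of x] x2 by (metis diff_diff_cancel less_Suc_eq_le numeral_2_eq_2 One_nat_def less_2_cases_iff)
    also have "UU D ` {..<Suc j} = insert u B0" unfolding u_def B0_def by (auto simp: lessThan_Suc)
    finally show ?thesis .
  qed
  then show ?thesis using R F by simp
qed


lemma chain_run:
  assumes "2 \<le> j" "j + n \<le> L"
  shows "run (A.VV D L) (A.EE D L) 2 (D + 3) (stA D j) (concat (map (lvj D) [j..<j + n])) \<and>
         fold apply_move (concat (map (lvj D) [j..<j + n])) (stA D j) = stA D (j + n)"
  using assms
proof (induction n)
  case 0
  have "valid_config 2 (D + 3) (stA D j)"
  proof -
    have "card (insert a (SA D y)) \<le> D + 3" for a y using card_ins_le[of "SA D y" a] by (simp add: card_SA)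
    then show ?thesis unfolding stA_def by (simp add: mk_valid)
  qed
  then show ?case by simp
next
  case (Suc n)
  then have IH: "run (A.VV D L) (A.EE D L) 2 (D + 3) (stA D j) (concat (map (lvj D) [j..<j + n])) \<and>
         fold apply_move (concat (map (lvj D) [j..<j + n])) (stA D j) = stA D (j + n)" by simp
  have L: "run (A.VV D L) (A.EE D L) 2 (D + 3) (stA D (j + n)) (lvj D (j + n)) \<and>
         fold apply_move (lvj D (j + n)) (stA D (j + n)) = stA D (Suc (j + n))"
    by (rule lvj_run) (use Suc.prems in auto)
  show ?case using IH L by (simp add: run_append)
qed

lemma SA_Suc: "SA (Suc n) x = insert (2 * n + x) (SA n x)"
  unfolding SA_def by (simp add: lessThan_Suc)

lemma SA_0: "SA 0 x = {}" unfolding SA_def by simp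

lemma mk_compute2': "apply_move (Compute [(0, a), (Suc 0, b)]) (mk 0 X Y B) = mk 0 (insert a X) (insert b Y) B"
  using mk_compute2 by simp
lemma mk_ok_compute2': "move_ok V E 2 (Compute [(0, a), (Suc 0, b)]) (mk 0 X Y B) \<longleftrightarrow>
    a \<in> V \<and> in_nbrs E a \<subseteq> X \<and> b \<in> V \<and> in_nbrs E b \<subseteq> Y"
  using mk_ok_compute2 by simp

definition preA :: "nat \<Rightarrow> nat move list" where
  "preA n = map (\<lambda>i. Compute [(0, 2 * i), (1, 2 * i + 1)]) [0..<n]"

lemma pre_run:
  assumes "n \<le> D" "1 \<le> L"
  shows "run (A.VV D L) (A.EE D L) 2 (D + 3) (mk 0 {} {} {}) (preA n) \<and>
         fold apply_move (preA n) (mk 0 {} {} {}) = mk 0 (SA n 0) (SA n 1) {}"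
  using assms
proof (induction n)
  case 0 then show ?case by (simp add: preA_def mk_valid SA_0)
next
  case (Suc n)
  then have IH: "run (A.VV D L) (A.EE D L) 2 (D + 3) (mk 0 {} {} {}) (preA n) \<and>
         fold apply_move (preA n) (mk 0 {} {} {}) = mk 0 (SA n 0) (SA n 1) {}" by simp
  have p: "preA (Suc n) = preA n @ [Compute [(0, 2 * n), (1, 2 * n + 1)]]" by (simp add: preA_def)
  have V: "2 * n \<in> A.VV D L" "2 * n + 1 \<in> A.VV D L" using Suc.prems unfolding A.VV_def by auto
  have i0: "in_nbrs (A.EE D L) (2 * n) \<subseteq> SA n 0"
  proof -
    have "in_nbrs (A.EE D L) (2 * n) = innA D (2 * n)" using A.in_nbrs_EE[of D L "2 * n"] V unfolding A.VV_def by simp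
    also have "\<dots> = (if 2 * n < 2 then {} else {2 * n - 2})" using Suc.prems unfolding innA_def by simp
    also have "\<dots> \<subseteq> SA n 0"
    proof (cases "n = 0")
      case False
      then have "2 * n - 2 = 2 * (n - 1) + 0" "n - 1 < n" by auto
      then have "2 * n - 2 \<in> SA n 0" unfolding SA_def by (metis image_eqI lessThan_iff)
      then show ?thesis by auto
    qed simp
    finally show ?thesis .
  qed
  have i1: "in_nbrs (A.EE D L) (2 * n + 1) \<subseteq> SA n 1"
  proof -
    have "in_nbrs (A.EE D L) (2 * n + 1) = innA D (2 * n + 1)" using A.in_nbrs_EE[of D L "2 * n + 1"] V unfolding A.VV_def by simp
    also have "\<dots> = (if 2 * n + 1 < 2 then {} else {2 * n + 1 - 2})" using Suc.prems unfolding innA_def by simp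
    also have "\<dots> \<subseteq> SA n 1"
    proof (cases "n = 0")
      case False
      then have "2 * n + 1 - 2 = 2 * (n - 1) + 1" "n - 1 < n" by auto
      then have "2 * n + 1 - 2 \<in> SA n 1" unfolding SA_def by (metis image_eqI lessThan_iff)
      then show ?thesis by auto
    qed simp
    finally show ?thesis .
  qed
  have c: "card (SA (Suc n) 0) \<le> D + 3" "card (SA (Suc n) 1) \<le> D + 3" using Suc.prems by (simp_all add: card_SA)
  have c0: "card (SA n 0) \<le> D + 3" "card (SA n 1) \<le> D + 3" using Suc.prems by (simp_all add: card_SA)
  show ?case using IH p V i0 i1 c c0 by (simp add: run_append mk_compute2' mk_ok_compute2' mk_valid SA_Suc)
qed

definition lv0 :: "nat \<Rightarrow> nat move list" where
  "lv0 D = [Compute [(0, UU D 0)], Save [(0, UU D 0)], DelRed 0 (UU D 0), Compute [(0, WW D 0)]]"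

definition lv1 :: "nat \<Rightarrow> nat move list" where
  "lv1 D = [Load [(1, UU D 0)], Compute [(1, UU D 1)], Save [(1, UU D 1)], DelRed 1 (UU D 1),
            Compute [(1, WW D 1)], DelRed 1 (UU D 0)]"

lemma lv01_run:
  assumes "3 \<le> L"
  shows "run (A.VV D L) (A.EE D L) 2 (D + 3) (mk 0 (SA D 0) (SA D 1) {}) (lv0 D @ lv1 D) \<and>
         fold apply_move (lv0 D @ lv1 D) (mk 0 (SA D 0) (SA D 1) {}) = stA D 2"
proof -
  have big: "\<And>v y. 2 * D \<le> v \<Longrightarrow> y < 2 \<Longrightarrow> v \<notin> SA D y" using notin_SA_big by blast
  have nS: "UU D 0 \<notin> SA D 0" "WW D 0 \<notin> SA D 0" "UU D 0 \<notin> SA D 1" "UU D 1 \<notin> SA D 1" "WW D 1 \<notin> SA D 1"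
    by (rule big; simp add: UU_def WW_def)+
  have V: "UU D 0 \<in> A.VV D L" "WW D 0 \<in> A.VV D L" "UU D 1 \<in> A.VV D L" "WW D 1 \<in> A.VV D L"
    using assms unfolding A.VV_def UU_def WW_def by auto
  have in0: "in_nbrs (A.EE D L) (UU D 0) = SA D 0" "in_nbrs (A.EE D L) (WW D 0) = SA D 0"
    using A.in_nbrs_EE[of D L "UU D 0"] A.in_nbrs_EE[of D L "WW D 0"] V
    unfolding A.VV_def innA_def UU_def WW_def by auto
  have in1: "in_nbrs (A.EE D L) (UU D 1) = insert (UU D 0) (SA D 1)" "in_nbrs (A.EE D L) (WW D 1) = insert (UU D 0) (SA D 1)"
    using A.in_nbrs_EE[of D L "UU D 1"] A.in_nbrs_EE[of D L "WW D 1"] V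
    unfolding A.VV_def innA_def UU_def WW_def by auto
  have d: "UU D 0 \<noteq> WW D 0" "UU D 0 \<noteq> UU D 1" "UU D 0 \<noteq> WW D 1" "UU D 1 \<noteq> WW D 1"
    by (simp_all add: UU_def WW_def)
  have cS: "card (SA D 0) = D" "card (SA D 1) = D" by (simp_all add: card_SA)
  have c: "card (insert (UU D 0) (SA D 0)) \<le> D + 3" "card (insert (WW D 0) (SA D 0)) \<le> D + 3"
    "card (insert (UU D 0) (SA D 1)) \<le> D + 3" "card (insert (UU D 1) (insert (UU D 0) (SA D 1))) \<le> D + 3"
    "card (insert (WW D 1) (insert (UU D 0) (SA D 1))) \<le> D + 3" "card (insert (WW D 1) (SA D 1)) \<le> D + 3"
    "card (SA D 0) \<le> D + 3" "card (SA D 1) \<le> D + 3"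
    using cS nS d by (auto simp: card_insert_if)
  have e1: "insert (UU D 0) (SA D 0) - {UU D 0} = SA D 0" using nS by auto
  have e2: "insert (UU D 1) (insert (UU D 0) (SA D 1)) - {UU D 1} = insert (UU D 0) (SA D 1)" using nS d by auto
  have e3: "insert (WW D 1) (insert (UU D 0) (SA D 1)) - {UU D 0} = insert (WW D 1) (SA D 1)" using nS d by auto
  have sw: "mk 0 (insert (WW D 0) (SA D 0)) (SA D 1) {UU D 0} = mk 1 (SA D 1) (insert (WW D 0) (SA D 0)) {UU D 0}"
    using mk_swap[of 0] by simp
  have R0: "run (A.VV D L) (A.EE D L) 2 (D + 3) (mk 0 (SA D 0) (SA D 1) {}) (lv0 D)"
    unfolding lv0_def using V in0 c e1 by (simp add: mk_compute mk_save mk_del mk_ok_compute mk_ok_save mk_ok_del mk_valid)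
  have F0: "fold apply_move (lv0 D) (mk 0 (SA D 0) (SA D 1) {}) = mk 0 (insert (WW D 0) (SA D 0)) (SA D 1) {UU D 0}"
    unfolding lv0_def using e1 by (simp add: mk_compute mk_save mk_del)
  have R1: "run (A.VV D L) (A.EE D L) 2 (D + 3) (mk 1 (SA D 1) (insert (WW D 0) (SA D 0)) {UU D 0}) (lv1 D)"
    unfolding lv1_def using V in1 c e2 e3 by (simp add: mk_compute mk_load mk_save mk_del mk_ok_compute mk_ok_load mk_ok_save mk_ok_del mk_valid)
  have F1: "fold apply_move (lv1 D) (mk 1 (SA D 1) (insert (WW D 0) (SA D 0)) {UU D 0})
      = mk 1 (insert (WW D 1) (SA D 1)) (insert (WW D 0) (SA D 0)) {UU D 1, UU D 0}"
    unfolding lv1_def using e2 e3 by (simp add: mk_compute mk_load mk_save mk_del)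
  have st2: "stA D 2 = mk 1 (insert (WW D 1) (SA D 1)) (insert (WW D 0) (SA D 0)) {UU D 1, UU D 0}"
  proof -
    have "stA D 2 = mk 0 (insert (WW D 0) (SA D 0)) (insert (WW D 1) (SA D 1)) (UU D ` {..<2})"
      unfolding stA_def by simp
    also have "UU D ` {..<2} = {UU D 1, UU D 0}" by (auto simp: numeral_2_eq_2 lessThan_Suc)
    finally show ?thesis using mk_swap[of 0] by simp
  qed
  show ?thesis using R0 F0 R1 F1 sw st2 by (simp add: run_append)
qed

definition optA :: "nat \<Rightarrow> nat \<Rightarrow> nat move list" where
  "optA D L = preA D @ lv0 D @ lv1 D @ concat (map (lvj D) [2..<L])"

lemma optA_run:
  assumes "3 \<le> L"
  shows "run (A.VV D L) (A.EE D L) 2 (D + 3) init_config (optA D L) \<and>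
    fold apply_move (optA D L) init_config = stA D L"
proof -
  have P: "run (A.VV D L) (A.EE D L) 2 (D + 3) (mk 0 {} {} {}) (preA D) \<and>
         fold apply_move (preA D) (mk 0 {} {} {}) = mk 0 (SA D 0) (SA D 1) {}"
    by (rule pre_run) (use assms in auto)
  have C: "run (A.VV D L) (A.EE D L) 2 (D + 3) (stA D 2) (concat (map (lvj D) [2..<2 + (L - 2)])) \<and>
         fold apply_move (concat (map (lvj D) [2..<2 + (L - 2)])) (stA D 2) = stA D (2 + (L - 2))"
    by (rule chain_run) (use assms in auto)
  have e: "2 + (L - 2) = L" using assms by simp
  show ?thesis using P lv01_run[OF assms] C unfolding optA_def init_mk e
    by (simp add: run_append)
qed

lemma optA_cost: "strategy_cost g (optA D L) = D + (2 + g) + (L - 2) * (2 + 2 * g) + (2 + 2 * g)"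
proof -
  have a: "strategy_cost g (xs @ ys) = strategy_cost g xs + strategy_cost g ys" for xs ys :: "nat move list"
    by (simp add: strategy_cost_def)
  have p: "strategy_cost g (preA D) = D" by (simp add: strategy_cost_def preA_def comp_def sum_list_triv)
  have l0: "strategy_cost g (lv0 D) = 2 + g" by (simp add: strategy_cost_def lv0_def)
  have l1: "strategy_cost g (lv1 D) = 2 + 2 * g" by (simp add: strategy_cost_def lv1_def)
  have lj: "strategy_cost g (lvj D j) = 2 + 2 * g" for j by (simp add: strategy_cost_def lvj_def Let_def)
  have "strategy_cost g (concat (map (lvj D) xs)) = length xs * (2 + 2 * g)" for xs
    by (induction xs) (simp_all add: a lj, simp add: strategy_cost_def)
  then show ?thesis unfolding optA_def a p l0 l1 by simp
qed


lemma mk_pebbled: "x < 2 \<Longrightarrow> snd (mk x X Y B) \<union> (\<Union>j<2. fst (mk x X Y B) j) = B \<union> X \<union> Y"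
proof -
  assume x: "x < 2"
  have "(\<Union>j<2. fst (mk x X Y B) j) = fst (mk x X Y B) 0 \<union> fst (mk x X Y B) 1"
    by (auto simp: numeral_2_eq_2 less_Suc_eq)
  then show ?thesis using x unfolding mk_def by (cases "x = 0") auto
qed

lemma termA:
  assumes L: "3 \<le> L"
  shows "terminal_config (A.VV D L) (A.EE D L) 2 (stA D L)"
  unfolding terminal_config_def
proof (intro allI impI)
  fix v assume sk: "is_sink (A.VV D L) (A.EE D L) v"
  let ?x = "L mod 2"
  have x2: "?x < 2" by simp
  have st: "stA D L = mk ?x (insert (WW D (L - 2)) (SA D ?x)) (insert (WW D (L - 1)) (SA D (1 - ?x))) (UU D ` {..<L})"
    unfolding stA_def by simp
  have vV: "v < 2 * (D + L)" using sk unfolding is_sink_def A.VV_def by simp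
  have "v \<in> UU D ` {..<L} \<union> insert (WW D (L - 2)) (SA D ?x) \<union> insert (WW D (L - 1)) (SA D (1 - ?x))"
  proof (cases "v < 2 * D")
    case True
    have "v mod 2 = ?x \<or> v mod 2 = 1 - ?x" by presburger
    then show ?thesis using True SA_iff[of ?x v D] SA_iff[of "1 - ?x" v D] by auto
  next
    case False
    define i where "i = v div 2 - D"
    have "v div 2 < D + L" using vV by (simp add: div_less_iff_less_mult mult.commute)
    then have iL: "i < L" unfolding i_def using L by presburger
    show ?thesis
    proof (cases "even v")
      case True
      then have "v = UU D i" unfolding UU_def i_def using False by (auto elim!: evenE)
      then show ?thesis using iL by auto
    next
      case odd: False
      then have vw: "v = WW D i" unfolding WW_def i_def using False by (auto elim!: oddE)
      show ?thesis
      proof (cases "i + 2 < L")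
        case True
        let ?u = "UU D (i + 2)"
        have ul: "?u < 2 * (D + L)" using True unfolding UU_def by simp
        have "D + 2 \<le> ?u div 2" unfolding UU_def by simp
        then have "innA D ?u = insert (2 * (?u div 2) - 2) (insert (2 * (?u div 2) - 3) (SA D ((?u div 2 - D) mod 2)))"
          by (rule innA_chain)
        moreover have "2 * (?u div 2) - 3 = v" unfolding vw UU_def WW_def by simp
        ultimately have "v \<in> innA D ?u" by simp
        then have "(v, ?u) \<in> A.EE D L" unfolding A.EE_def using ul by simp
        then show ?thesis using sk unfolding is_sink_def by blast
      next
        case False
        then have "i = L - 2 \<or> i = L - 1" using iL by linarith
        then show ?thesis using vw by auto
      qed
    qed
  qed
  then show "v \<in> snd (stA D L) \<union> (\<Union>j<2. fst (stA D L) j)" unfolding st mk_pebbled[OF x2] by blast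
qed

lemma optA_ps: "3 \<le> L \<Longrightarrow> pebbling_strategy (A.VV D L) (A.EE D L) 2 (D + 3) (optA D L)"
  using optA_run[of L D] termA[of L D] run_ps by metis

lemma greedyA_lower:
  assumes g: "greedy_strategy rl (A.VV D L) (A.EE D L) 2 (D + 3) ms" and L: "3 \<le> L" and g1: "1 \<le> gg"
  shows "real (strategy_cost gg ms) \<ge> real (L - 3) * (real D * (real gg + 1) / 2 + 1)"
proof -
  interpret G: lev_greedy "D + L" "innA D" rl "D + 3" ms
    using levA g by (simp add: lev_greedy_def lev_greedy_axioms_def)
  let ?c = "\<lambda>t. real (move_cost gg (ms ! t))"
  have nn: "\<And>t. ?c t \<ge> 0" by simp
  have S: "(\<Sum>t = Suc (G.Tl (D + 2))..<Suc (G.Tl (D + L - 1)). ?c t)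
      \<ge> real (D + L - 1 - (D + 2)) * (real D * (real gg + 1) / 2 + 1)"
  proof (rule sum_windows[of ?c "D + 2" "D + L - 1" G.Tl])
    show "\<And>l. D + 2 \<le> l \<Longrightarrow> l < D + L - 1 \<Longrightarrow> G.Tl l < G.Tl (Suc l)" using G.Tl_lt by simp
  next
    fix l assume l: "D + 2 < l" "l \<le> D + L - 1"
    have "(\<Sum>t = Suc (G.Tl (D + (l - D) - 1))..<Suc (G.Tl (D + (l - D))). ?c t) \<ge> real D * (real gg + 1) / 2 + 1"
      using greedyA_window[OF g _ _ g1, of "l - D"] l by simp
    then show "(\<Sum>t = Suc (G.Tl (l - 1))..<Suc (G.Tl l). ?c t) \<ge> real D * (real gg + 1) / 2 + 1"
      using l by simp
  qed (use L in auto)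
  have "Suc (G.Tl (D + L - 1)) \<le> length ms" using G.Tl_props(1)[of "D + L - 1"] L by simp
  then have "(\<Sum>t = Suc (G.Tl (D + 2))..<Suc (G.Tl (D + L - 1)). ?c t) \<le> (\<Sum>t = 0..<length ms. ?c t)"
    by (intro sum_mono2) auto
  moreover have "D + L - 1 - (D + 2) = L - 3" by simp
  ultimately show ?thesis using S strategy_cost_sum[of gg ms] by simp
qed

lemma arithA:
  fixes d gg l :: real
  assumes d: "d \<ge> 4" and g: "gg \<ge> 1" and l: "l \<ge> 2 * d * (gg + 1) + d * d + 3"
  shows "(l - 3) * (d * (gg + 1) / 2 + 1) \<ge> ((d - 3) / 5) * (d + l * (2 + 2 * gg))"
proof -
  define A where "A = d * (gg + 1) / 2 + 1"
  define c where "c = (d - 3) / 5"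
  define B where "B = 2 + 2 * gg"
  have AcB: "A - c * B = (gg + 1) * (d + 12) / 10 + 1" unfolding A_def c_def B_def by (simp add: field_simps)
  have "(gg + 1) * (d + 12) / 10 \<ge> 0" using d g by simp
  then have AcB1: "A - c * B \<ge> 1" using AcB by linarith
  have l0: "l \<ge> 0" using l d g by (smt (verit) mult_nonneg_nonneg)
  have "l * (A - c * B) \<ge> l * 1" using AcB1 l0 by (intro mult_left_mono) auto
  moreover have "3 * A \<le> 2 * d * (gg + 1) + 3" unfolding A_def using d g by (simp add: field_simps)
  moreover have "c * d \<le> d * d" unfolding c_def using d by (simp add: field_simps)
  ultimately have "l * (A - c * B) \<ge> 3 * A + c * d" using l by linarith
  then have "(l - 3) * A \<ge> c * (d + l * B)" by (simp add: algebra_simps)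
  then show ?thesis unfolding A_def c_def B_def .
qed


lemma optA_cost_le: "3 \<le> L \<Longrightarrow> strategy_cost g (optA D L) \<le> D + L * (2 + 2 * g)"
proof -
  assume "3 \<le> L"
  define k where "k = L - 2"
  have k: "L = k + 2" unfolding k_def using \<open>3 \<le> L\<close> by simp
  show ?thesis unfolding optA_cost k by (simp add: algebra_simps)
qed

theorem partA:
  "\<forall>\<Delta> g :: nat. \<Delta> \<ge> 2 \<longrightarrow> g \<ge> 2 \<longrightarrow>
      (\<exists>(V :: nat \<Rightarrow> nat set) (E :: nat \<Rightarrow> (nat \<times> nat) set) (r :: nat \<Rightarrow> nat).
         (\<forall>N. is_dag (V N) (E N) \<and> max_indeg (V N) (E N) = \<Delta> \<and> r N \<ge> \<Delta> + 1) \<and>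
         filterlim (\<lambda>N. card (V N)) at_top sequentially \<and>
         (\<forall>\<^sub>F N in sequentially. \<forall>ms. greedy_strategy rl (V N) (E N) 2 (r N) ms \<longrightarrow>
            real (strategy_cost g ms) \<ge> (real \<Delta> / 5 - 1) * real (mpp_opt (V N) (E N) 2 (r N) g)))"
proof (intro allI impI)
  fix \<Delta> g :: nat assume D2: "\<Delta> \<ge> 2" and g2: "g \<ge> 2"
  define D where "D = \<Delta> - 2"
  have DD: "\<Delta> = D + 2" using D2 unfolding D_def by simp
  define Lf where "Lf N = N + 2 * D * (g + 1) + D * D + 3" for N
  define V where "V N = A.VV D (Lf N)" for N
  define E where "E N = A.EE D (Lf N)" for N
  define r where "r (N::nat) = D + 3" for N
  have L3: "3 \<le> Lf N" for N unfolding Lf_def by simp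
  have main: "real (strategy_cost g ms) \<ge> (real \<Delta> / 5 - 1) * real (mpp_opt (V N) (E N) 2 (r N) g)"
    if gs: "greedy_strategy rl (V N) (E N) 2 (r N) ms" for N ms
  proof -
    let ?L = "Lf N"
    have lo: "real (strategy_cost g ms) \<ge> real (?L - 3) * (real D * (real g + 1) / 2 + 1)"
      using greedyA_lower[OF gs[unfolded V_def E_def r_def] L3] g2 by simp
    have "mpp_opt (V N) (E N) 2 (r N) g \<le> strategy_cost g (optA D ?L)"
      unfolding V_def E_def r_def using opt_le optA_ps[OF L3] by metis
    also have "\<dots> \<le> D + ?L * (2 + 2 * g)" by (rule optA_cost_le[OF L3])
    finally have op: "real (mpp_opt (V N) (E N) 2 (r N) g) \<le> real D + real ?L * (2 + 2 * real g)"
      by (metis (mono_tags, lifting) of_nat_add of_nat_le_iff of_nat_mult of_nat_numeral numeral_2_eq_2 of_nat_Suc)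
    have pos: "0 \<le> real (strategy_cost g ms)" by simp
    show ?thesis
    proof (cases "real \<Delta> / 5 - 1 \<le> 0")
      case True
      then have "(real \<Delta> / 5 - 1) * real (mpp_opt (V N) (E N) 2 (r N) g) \<le> 0"
        by (simp add: mult_nonpos_nonneg)
      then show ?thesis using pos by linarith
    next
      case False
      then have c: "real \<Delta> / 5 - 1 = (real D - 3) / 5" "real \<Delta> / 5 - 1 \<ge> 0" using DD by auto
      have d4: "real D \<ge> 4" using False DD by simp
      have lL: "real ?L \<ge> 2 * real D * (real g + 1) + real D * real D + 3" unfolding Lf_def by (simp add: algebra_simps)
      have ar: "(real ?L - 3) * (real D * (real g + 1) / 2 + 1) \<ge> ((real D - 3) / 5) * (real D + real ?L * (2 + 2 * real g))"
        by (rule arithA[OF d4 _ lL]) (use g2 in simp)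
      have "(real \<Delta> / 5 - 1) * real (mpp_opt (V N) (E N) 2 (r N) g) \<le> (real \<Delta> / 5 - 1) * (real D + real ?L * (2 + 2 * real g))"
        using op c(2) by (rule mult_left_mono)
      also have "\<dots> = ((real D - 3) / 5) * (real D + real ?L * (2 + 2 * real g))" using c(1) by simp
      also have "\<dots> \<le> (real ?L - 3) * (real D * (real g + 1) / 2 + 1)" by (rule ar)
      also have "\<dots> = real (?L - 3) * (real D * (real g + 1) / 2 + 1)" using L3[of N] by simp
      also have "\<dots> \<le> real (strategy_cost g ms)" by (rule lo)
      finally show ?thesis .
    qed
  qed
  show "\<exists>(V :: nat \<Rightarrow> nat set) (E :: nat \<Rightarrow> (nat \<times> nat) set) (r :: nat \<Rightarrow> nat).
         (\<forall>N. is_dag (V N) (E N) \<and> max_indeg (V N) (E N) = \<Delta> \<and> r N \<ge> \<Delta> + 1) \<and>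
         filterlim (\<lambda>N. card (V N)) at_top sequentially \<and>
         (\<forall>\<^sub>F N in sequentially. \<forall>ms. greedy_strategy rl (V N) (E N) 2 (r N) ms \<longrightarrow>
            real (strategy_cost g ms) \<ge> (real \<Delta> / 5 - 1) * real (mpp_opt (V N) (E N) 2 (r N) g))"
  proof (intro exI conjI allI)
    fix N
    show "is_dag (V N) (E N)" unfolding V_def E_def by (rule A.dag)
    show "max_indeg (V N) (E N) = \<Delta>" unfolding V_def E_def DD by (rule maxA[OF L3])
    show "r N \<ge> \<Delta> + 1" unfolding r_def DD by simp
  next
    have card: "card (V N) = 2 * (D + Lf N)" for N unfolding V_def by (rule A.card_VV)
    show "filterlim (\<lambda>N. card (V N)) at_top sequentially"
      unfolding filterlim_at_top eventually_sequentially card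
    proof
      fix Z :: nat show "\<exists>N0. \<forall>n\<ge>N0. Z \<le> 2 * (D + Lf n)" by (intro exI[of _ Z]) (auto simp: Lf_def)
    qed
  next
    show "\<forall>\<^sub>F N in sequentially. \<forall>ms. greedy_strategy rl (V N) (E N) 2 (r N) ms \<longrightarrow>
            real (strategy_cost g ms) \<ge> (real \<Delta> / 5 - 1) * real (mpp_opt (V N) (E N) 2 (r N) g)"
      using main by (simp add: always_eventually)
  qed
qed


theorem lemma4:
  fixes rl :: greedy_rule
  shows
  "(\<forall>\<Delta> g :: nat. \<Delta> \<ge> 2 \<longrightarrow> g \<ge> 2 \<longrightarrow>
      (\<exists>(V :: nat \<Rightarrow> nat set) (E :: nat \<Rightarrow> (nat \<times> nat) set) (r :: nat \<Rightarrow> nat).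
         (\<forall>N. is_dag (V N) (E N) \<and> max_indeg (V N) (E N) = \<Delta> \<and> r N \<ge> \<Delta> + 1) \<and>
         filterlim (\<lambda>N. card (V N)) at_top sequentially \<and>
         (\<forall>\<^sub>F N in sequentially. \<forall>ms. greedy_strategy rl (V N) (E N) 2 (r N) ms \<longrightarrow>
            real (strategy_cost g ms) \<ge> (real \<Delta> / 5 - 1) * real (mpp_opt (V N) (E N) 2 (r N) g))))
   \<and>
   (\<forall>g :: nat. g \<ge> 2 \<longrightarrow>
      (\<exists>(V :: nat \<Rightarrow> nat set) (E :: nat \<Rightarrow> (nat \<times> nat) set) (r :: nat \<Rightarrow> nat).
         (\<forall>N. is_dag (V N) (E N) \<and> r N \<ge> card (V N)) \<and>
         filterlim (\<lambda>N. card (V N)) at_top sequentially \<and>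
         (\<forall>\<epsilon> > 0. \<forall>\<^sub>F N in sequentially. \<forall>ms. greedy_strategy rl (V N) (E N) 2 (r N) ms \<longrightarrow>
            real (strategy_cost g ms) \<ge> (1 + 2 / 3 * real g - \<epsilon>) * real (mpp_opt (V N) (E N) 2 (r N) g))))"
  using partA[of rl] partB[of rl] by (rule conjI)

end
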